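(* Let $\mathfrak h$ be a finite-dimensional real vector space with a non-degenerate symmetric bilinear form $\langle-,-\rangle$, and $\Lambda\subset\mathfrak h$ an even lattice (discrete subgroup with $\langle\alpha,\alpha\rangle\in2\mathbb Z$; not necessarily full rank, and $\langle-,-\rangle|_\Lambda$ possibly degenerate). Let $\Lambda^*=\{\mu\in\mathfrak h:\langle\mu,\Lambda\rangle\subset\mathbb Z\}$, $\Lambda^\perp=\{\mu\in\mathfrak h:\langle\mu,\Lambda\rangle=0\}$ and $\Lambda^\circ=\{v\in\Lambda:\langle v,w\rangle=0\ \forall w\in\Lambda\}$. Then: (1) there is a finitely generated free abelian subgroup $\Gamma\subset\Lambda^*$ with $\Lambda^*=\Lambda^\perp\oplus\Gamma$ (internal direct sum of $\mathbb Z$-modules); (2) $\Gamma$ may be chosen so that there exist a real vector subspace $V\subset\Lambda^\perp$ and finitely generated free subgroups $F,D\subset\Gamma$ with $\Lambda^*=V\oplus\mathbb R\Lambda^\circ\oplus F\oplus D$, where the three subgroups $V$, $\mathbb R\Lambda^\circ\oplus F$ and $D$ are mutually orthogonal, $\langle-,-\rangle$ restricted to each of these three is non-degenerate, and $\langle-,-\rangle$ restricted to $\mathbb R\Lambda^\circ$ and to $F$ individually is identically zero.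
   Context: $\mathbb R\Lambda^\circ$ denotes the real span of $\Lambda^\circ$. *)

theory Defs
  imports "HOL-Analysis.Analysis"
begin

definition add_subgroup :: "'a::ab_group_add set \<Rightarrow> bool" where
  "add_subgroup A \<longleftrightarrow> 0 \<in> A \<and> (\<forall>x\<in>A. \<forall>y\<in>A. x + y \<in> A) \<and> (\<forall>x\<in>A. - x \<in> A)"

definition int_comb :: "'a::real_vector list \<Rightarrow> (nat \<Rightarrow> int) \<Rightarrow> 'a" where
  "int_comb bs c = (\<Sum>i<length bs. of_int (c i) *\<^sub>R bs ! i)"

definition fg_free_subgroup :: "'a::real_vector set \<Rightarrow> bool" where
  "fg_free_subgroup G \<longleftrightarrow>
     (\<exists>bs. G = range (int_comb bs) \<and>
           (\<forall>c. int_comb bs c = 0 \<longrightarrow> (\<forall>i<length bs. c i = 0)))"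

definition internal_dsum :: "'a::ab_group_add set list \<Rightarrow> 'a set \<Rightarrow> bool" where
  "internal_dsum Ss C \<longleftrightarrow>
     (\<forall>xs. length xs = length Ss \<and> (\<forall>i<length Ss. xs ! i \<in> Ss ! i) \<longrightarrow> sum_list xs \<in> C) \<and>
     (\<forall>c\<in>C. \<exists>!xs. length xs = length Ss \<and> (\<forall>i<length Ss. xs ! i \<in> Ss ! i) \<and> sum_list xs = c)"

definition set_sum :: "'a::ab_group_add set \<Rightarrow> 'a set \<Rightarrow> 'a set" where
  "set_sum A B = {a + b | a b. a \<in> A \<and> b \<in> B}"

definition nondegenerate_on :: "('a \<Rightarrow> 'a \<Rightarrow> real) \<Rightarrow> 'a::real_vector set \<Rightarrow> bool" where
  "nondegenerate_on B S \<longleftrightarrow> (\<forall>x\<in>S. (\<forall>y\<in>S. B x y = 0) \<longrightarrow> x = 0)"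

definition orthogonal_sets :: "('a \<Rightarrow> 'a \<Rightarrow> real) \<Rightarrow> 'a set \<Rightarrow> 'a set \<Rightarrow> bool" where
  "orthogonal_sets B S T \<longleftrightarrow> (\<forall>x\<in>S. \<forall>y\<in>T. B x y = 0)"

definition dual_lattice :: "('a \<Rightarrow> 'a \<Rightarrow> real) \<Rightarrow> 'a set \<Rightarrow> 'a set" where
  "dual_lattice B L = {\<mu>. \<forall>a\<in>L. B \<mu> a \<in> \<int>}"

definition perp_space :: "('a \<Rightarrow> 'a \<Rightarrow> real) \<Rightarrow> 'a set \<Rightarrow> 'a set" where
  "perp_space B L = {\<mu>. \<forall>a\<in>L. B \<mu> a = 0}"

definition radical :: "('a \<Rightarrow> 'a \<Rightarrow> real) \<Rightarrow> 'a set \<Rightarrow> 'a set" where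
  "radical B L = {v\<in>L. \<forall>w\<in>L. B v w = 0}"

end

theory Submission
  imports Defs "HOL-Analysis.Analysis"
begin


definition lcomb :: "'a::real_vector list \<Rightarrow> (nat \<Rightarrow> real) \<Rightarrow> 'a" where
  "lcomb bs c = (\<Sum>i<length bs. c i *\<^sub>R bs ! i)"

definition lindep :: "'a::real_vector list \<Rightarrow> bool" where
  "lindep bs \<longleftrightarrow> (\<forall>c. lcomb bs c = 0 \<longrightarrow> (\<forall>i<length bs. c i = 0))"

definition lspan :: "'a::real_vector list \<Rightarrow> 'a set" where
  "lspan bs = range (lcomb bs)"

lemma int_comb_lcomb: "int_comb bs c = lcomb bs (\<lambda>i. of_int (c i))"
  by (simp add: int_comb_def lcomb_def)

lemma lcomb_add: "lcomb bs c + lcomb bs d = lcomb bs (\<lambda>i. c i + d i)"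
  by (simp add: lcomb_def scaleR_add_left sum.distrib)

lemma lcomb_diff: "lcomb bs c - lcomb bs d = lcomb bs (\<lambda>i. c i - d i)"
  by (simp add: lcomb_def scaleR_diff_left sum_subtractf)

lemma lcomb_scale: "a *\<^sub>R lcomb bs c = lcomb bs (\<lambda>i. a * c i)"
  by (simp add: lcomb_def scaleR_sum_right)

lemma lcomb_uminus: "- lcomb bs c = lcomb bs (\<lambda>i. - c i)"
  by (simp add: lcomb_def sum_negf)

lemma lcomb_zero: "lcomb bs (\<lambda>i. 0) = 0"
  by (simp add: lcomb_def)

lemma lcomb_cong: "(\<And>i. i < length bs \<Longrightarrow> c i = d i) \<Longrightarrow> lcomb bs c = lcomb bs d"
  by (simp add: lcomb_def)

lemma lindep_unique:
  assumes "lindep bs" "lcomb bs c = lcomb bs d" "i < length bs"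
  shows "c i = d i"
proof -
  have "lcomb bs (\<lambda>i. c i - d i) = 0" using assms(2) lcomb_diff[of bs c d] by simp
  then show ?thesis using assms(1,3) unfolding lindep_def by fastforce
qed

lemma lcomb_snoc: "lcomb (xs @ [y]) c = lcomb xs c + c (length xs) *\<^sub>R y"
proof -
  have "lcomb (xs @ [y]) c = (\<Sum>i<length xs. c i *\<^sub>R (xs@[y]) ! i) + c (length xs) *\<^sub>R y"
    by (simp add: lcomb_def)
  also have "(\<Sum>i<length xs. c i *\<^sub>R (xs@[y]) ! i) = lcomb xs c"
    unfolding lcomb_def by (rule sum.cong) (auto simp: nth_append)
  finally show ?thesis .
qed

lemma lcomb_append: "lcomb (xs @ ys) c = lcomb xs c + lcomb ys (\<lambda>i. c (length xs + i))"
proof (induction ys rule: rev_induct)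
  case Nil then show ?case by (simp add: lcomb_def)
next
  case (snoc y ys)
  then show ?case using lcomb_snoc[of "xs @ ys" y c] lcomb_snoc[of ys y "\<lambda>i. c (length xs + i)"]
    by (simp add: algebra_simps)
qed

lemma lcomb_nth: "lcomb bs (\<lambda>j. if j = i then 1 else 0) = bs ! i" if "i < length bs"
proof -
  have "\<And>j. (if j = i then 1 else 0) *\<^sub>R bs ! j = (if j = i then bs ! j else 0)" by simp
  then show ?thesis using that by (simp add: lcomb_def)
qed

lemma lcomb_map: "linear f \<Longrightarrow> f (lcomb bs c) = lcomb (map f bs) c"
  by (simp add: lcomb_def linear_sum linear_scale)

lemma lcomb_Nil[simp]: "lcomb [] c = 0"
  by (simp add: lcomb_def)

lemma bil_lcomb_left:
  assumes "bilinear B"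
  shows "B (lcomb bs c) y = (\<Sum>i<length bs. c i * B (bs ! i) y)"
proof -
  have lin: "linear (\<lambda>x. B x y)" using assms by (simp add: bilinear_def)
  show ?thesis unfolding lcomb_def
    using linear_sum[OF lin, of "\<lambda>i. c i *\<^sub>R bs ! i" "{..<length bs}"] linear_scale[OF lin]
    by simp
qed

lemma bil_lcomb_right:
  assumes "bilinear B"
  shows "B y (lcomb bs c) = (\<Sum>i<length bs. c i * B y (bs ! i))"
proof -
  have "linear (\<lambda>x. B y x)" using assms by (simp add: bilinear_def)
  then show ?thesis by (simp add: lcomb_def linear_sum linear_scale)
qed

lemma sum_delta_nat: "(\<Sum>i<n. c i * (if i = j then 1 else 0)) = (c j :: real)" if "j < (n::nat)"
proof -
  have "(\<Sum>i<n. c i * (if i = j then 1 else 0)) = (\<Sum>i\<in>{j}. c i * (if i = j then 1 else 0))"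
    using that by (intro sum.mono_neutral_right) auto
  then show ?thesis by simp
qed

lemma sum_delta_nat': "(\<Sum>i<n. c i * (if j = i then 1 else 0)) = (c j :: real)" if "j < (n::nat)"
proof -
  have "(\<Sum>i<n. c i * (if j = i then 1 else 0)) = (\<Sum>i\<in>{j}. c i * (if j = i then 1 else 0))"
    using that by (intro sum.mono_neutral_right) auto
  then show ?thesis by simp
qed

lemma lspan_subspace: "subspace (lspan bs)"
  unfolding subspace_def lspan_def
  by (auto simp: lcomb_add lcomb_scale) (metis lcomb_zero rangeI)

lemma lcomb_in_span: "lcomb bs c \<in> span (set bs)"
  unfolding lcomb_def by (intro span_sum span_scale span_base) auto

lemma lspan_eq_span: "lspan bs = span (set bs)"
proof
  show "lspan bs \<subseteq> span (set bs)" using lcomb_in_span by (auto simp: lspan_def)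
  have "set bs \<subseteq> lspan bs"
    by (auto simp: lspan_def in_set_conv_nth) (metis lcomb_nth rangeI)
  then show "span (set bs) \<subseteq> lspan bs"
    using lspan_subspace span_minimal by blast
qed



lemma lcomb_upd_snoc: "lcomb (bs @ [b]) (u(length bs := a)) = lcomb bs u + a *\<^sub>R b"
proof -
  have "lcomb bs (u(length bs := a)) = lcomb bs u" by (rule lcomb_cong) auto
  then show ?thesis by (simp add: lcomb_snoc)
qed

lemma lindep_snocD:
  assumes "lindep (bs @ [b])" "lcomb bs u + a *\<^sub>R b = 0"
  shows "a = 0" "\<And>i. i < length bs \<Longrightarrow> u i = 0"
proof -
  have "lcomb (bs @ [b]) (u(length bs := a)) = 0" using assms(2) lcomb_upd_snoc by metis
  then have *: "\<forall>i<Suc (length bs). (u(length bs := a)) i = 0"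
    using assms(1) unfolding lindep_def by (metis length_append_singleton)
  from * show "a = 0" by (metis fun_upd_same lessI)
  fix i assume "i < length bs" with * show "u i = 0" by (metis fun_upd_other less_SucI less_irrefl_nat)
qed

lemma lindep_butlast: "lindep (bs @ [b]) \<Longrightarrow> lindep bs"
  unfolding lindep_def[of bs] using lindep_snocD(2)[of bs b _ 0] by auto

lemma lindep_snocI:
  assumes "lindep bs" "\<And>u a. lcomb bs u + a *\<^sub>R b = 0 \<Longrightarrow> a = 0"
  shows "lindep (bs @ [b])"
  unfolding lindep_def
proof (intro allI impI)
  fix c i assume c: "lcomb (bs @ [b]) c = 0" and i: "i < length (bs @ [b])"
  then have "lcomb bs c + c (length bs) *\<^sub>R b = 0" by (simp add: lcomb_snoc)
  moreover from this assms(2) have "c (length bs) = 0" by blast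
  ultimately have "lcomb bs c = 0" by simp
  with assms(1) have "\<forall>i<length bs. c i = 0" unfolding lindep_def by blast
  with i \<open>c (length bs) = 0\<close> show "c i = 0" by (cases "i = length bs") auto
qed

lemma sg_zero: "add_subgroup G \<Longrightarrow> 0 \<in> G" by (simp add: add_subgroup_def)
lemma sg_add: "add_subgroup G \<Longrightarrow> x \<in> G \<Longrightarrow> y \<in> G \<Longrightarrow> x + y \<in> G" by (simp add: add_subgroup_def)
lemma sg_neg: "add_subgroup G \<Longrightarrow> x \<in> G \<Longrightarrow> - x \<in> G" by (simp add: add_subgroup_def)
lemma sg_diff: "add_subgroup G \<Longrightarrow> x \<in> G \<Longrightarrow> y \<in> G \<Longrightarrow> x - y \<in> G"
  using sg_add sg_neg by (metis diff_conv_add_uminus)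

lemma sg_nat_scale: "add_subgroup G \<Longrightarrow> x \<in> G \<Longrightarrow> of_nat n *\<^sub>R (x::'a::real_vector) \<in> G"
  by (induction n) (auto simp: sg_zero sg_add scaleR_add_left)

lemma sg_int_scale:
  assumes "add_subgroup G" "x \<in> G" shows "of_int k *\<^sub>R (x::'a::real_vector) \<in> G"
proof (cases "k \<ge> 0")
  case True
  then have "of_int k = (of_nat (nat k) :: real)" by simp
  then show ?thesis using sg_nat_scale[OF assms] by metis
next
  case False
  then have "of_int k *\<^sub>R x = - (of_nat (nat (- k)) *\<^sub>R x)" by simp
  then show ?thesis using sg_nat_scale[OF assms] sg_neg[OF assms(1)] by metis
qed

lemma sg_sum: "add_subgroup G \<Longrightarrow> (\<And>i. i \<in> I \<Longrightarrow> f i \<in> G) \<Longrightarrow> sum f I \<in> G"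
  by (induction I rule: infinite_finite_induct) (auto simp: sg_zero sg_add)

lemma sg_int_comb:
  assumes "add_subgroup G" "set bs \<subseteq> G" shows "int_comb bs c \<in> G"
  unfolding int_comb_def by (rule sg_sum[OF assms(1)]) (use assms in \<open>auto intro!: sg_int_scale\<close>)

lemma int_comb_add: "int_comb bs c + int_comb bs d = int_comb bs (\<lambda>i. c i + d i)"
  by (simp add: int_comb_lcomb lcomb_add)
lemma int_comb_diff: "int_comb bs c - int_comb bs d = int_comb bs (\<lambda>i. c i - d i)"
  by (simp add: int_comb_lcomb lcomb_diff)
lemma int_comb_neg: "- int_comb bs c = int_comb bs (\<lambda>i. - c i)"
  by (simp add: int_comb_lcomb lcomb_uminus)
lemma int_comb_zero: "int_comb bs (\<lambda>i. 0) = 0"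
  by (simp add: int_comb_def)
lemma int_comb_snoc: "int_comb (bs @ [b]) c = int_comb bs c + of_int (c (length bs)) *\<^sub>R b"
  by (simp add: int_comb_lcomb lcomb_snoc)
lemma int_comb_upd_snoc: "int_comb (bs @ [b]) (u(length bs := a)) = int_comb bs u + of_int a *\<^sub>R b"
proof -
  have "int_comb bs (u(length bs := a)) = int_comb bs u"
    unfolding int_comb_lcomb by (rule lcomb_cong) auto
  then show ?thesis by (simp add: int_comb_snoc)
qed
lemma int_comb_nth: "i < length bs \<Longrightarrow> int_comb bs (\<lambda>j. if j = i then 1 else 0) = bs ! i"
  unfolding int_comb_lcomb using lcomb_nth[of i bs] by (simp add: if_distrib cong: if_cong)

lemma sg_range_int_comb: "add_subgroup (range (int_comb bs))"
  unfolding add_subgroup_def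
  by (auto simp: int_comb_add int_comb_neg) (metis int_comb_zero rangeI)

lemma set_subset_range_int_comb: "set bs \<subseteq> range (int_comb bs)"
  by (auto simp: in_set_conv_nth) (metis int_comb_nth rangeI)

lemma range_int_comb_subset_lspan: "range (int_comb bs) \<subseteq> lspan bs"
  by (auto simp: lspan_def int_comb_lcomb)

lemma span_range_int_comb: "span (range (int_comb bs)) = lspan bs"
proof
  show "span (range (int_comb bs)) \<subseteq> lspan bs"
    using range_int_comb_subset_lspan lspan_subspace span_minimal by blast
  show "lspan bs \<subseteq> span (range (int_comb bs))"
    unfolding lspan_eq_span using set_subset_range_int_comb span_mono by blast
qed



lemma subgroup_basis:
  assumes "lindep bs" "add_subgroup G" "G \<subseteq> range (int_comb bs)"
  shows "\<exists>cs. lindep cs \<and> G = range (int_comb cs) \<and> set cs \<subseteq> G"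
  using assms
proof (induction bs arbitrary: G rule: rev_induct)
  case Nil
  have "G = {0}" using Nil.prems sg_zero[OF Nil.prems(2)] by (auto simp: int_comb_def)
  moreover have "range (int_comb []) = {0::'a}" by (auto simp: int_comb_def)
  moreover have "lindep ([]::'a list)" by (simp add: lindep_def)
  ultimately show ?case by (metis empty_set empty_subsetI)
next
  case (snoc b bs)
  let ?n = "length bs"
  have lbs: "lindep bs" using snoc.prems(1) lindep_butlast by blast
  have sgG: "add_subgroup G" by fact
  have rep: "\<exists>c k. g = int_comb bs c + of_int k *\<^sub>R b" if "g \<in> G" for g
    using snoc.prems(3) that int_comb_snoc by blast
  have uniq: "k = k'" if "int_comb bs c + of_int k *\<^sub>R b = int_comb bs c' + of_int k' *\<^sub>R b" for c k c' k'
  proof -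
    have "lcomb bs (\<lambda>i. of_int (c i) - of_int (c' i)) + (of_int k - of_int k') *\<^sub>R b = 0"
      using that by (simp add: int_comb_lcomb lcomb_diff[symmetric] algebra_simps)
    then have "(of_int k - of_int k' :: real) = 0" using lindep_snocD(1)[OF snoc.prems(1)] by blast
    then show ?thesis by simp
  qed
  define K where "K = {k::int. \<exists>c. int_comb bs c + of_int k *\<^sub>R b \<in> G}"
  show ?case
  proof (cases "K \<subseteq> {0}")
    case True
    have "G \<subseteq> range (int_comb bs)"
    proof
      fix g assume "g \<in> G"
      then obtain c k where g: "g = int_comb bs c + of_int k *\<^sub>R b" using rep by blast
      then have "k \<in> K" using \<open>g \<in> G\<close> unfolding K_def by blast
      with True have "k = 0" by blast
      with g show "g \<in> range (int_comb bs)" by simp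
    qed
    from snoc.IH[OF lbs sgG this] show ?thesis .
  next
    case False
    then obtain k where k: "k \<in> K" "k \<noteq> 0" by blast
    have Kneg: "- k \<in> K" if "k \<in> K" for k
    proof -
      from that obtain c where "int_comb bs c + of_int k *\<^sub>R b \<in> G" unfolding K_def by blast
      from sg_neg[OF sgG this] have "int_comb bs (\<lambda>i. - c i) + of_int (- k) *\<^sub>R b \<in> G"
        by (simp add: int_comb_neg[symmetric])
      then show ?thesis unfolding K_def by blast
    qed
    have "\<exists>n::nat. n > 0 \<and> int n \<in> K"
    proof (cases "k > 0")
      case True then show ?thesis using k by (intro exI[of _ "nat k"]) auto
    next
      case False then show ?thesis using k Kneg[OF k(1)] by (intro exI[of _ "nat (- k)"]) auto
    qed
    define d where "d = (LEAST n::nat. n > 0 \<and> int n \<in> K)"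
    have d: "d > 0" "int d \<in> K" using LeastI_ex[OF \<open>\<exists>n::nat. n > 0 \<and> int n \<in> K\<close>] unfolding d_def by auto
    have dmin: "\<not> (n > 0 \<and> int n \<in> K)" if "n < d" for n
      using not_less_Least[OF that[unfolded d_def]] .
    obtain c0 where g0G: "int_comb bs c0 + of_int (int d) *\<^sub>R b \<in> G" using d(2) unfolding K_def by blast
    define g0 where "g0 = int_comb bs c0 + of_int (int d) *\<^sub>R b"
    define G' where "G' = G \<inter> range (int_comb bs)"
    have sgG': "add_subgroup G'" unfolding G'_def using sgG sg_range_int_comb[of bs]
      unfolding add_subgroup_def by blast
    obtain cs' where cs': "lindep cs'" "G' = range (int_comb cs')" "set cs' \<subseteq> G'"
      using snoc.IH[OF lbs sgG'] G'_def by blast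
    let ?m = "length cs'"
    define cs where "cs = cs' @ [g0]"
    have g0G': "g0 \<in> G" using g0G g0_def by simp
    have setcs: "set cs \<subseteq> G" using cs'(3) g0G' unfolding cs_def G'_def by auto
    have sub1: "range (int_comb cs) \<subseteq> G"
      using sg_int_comb[OF sgG setcs] by blast
    have sub2: "G \<subseteq> range (int_comb cs)"
    proof
      fix g assume gG: "g \<in> G"
      then obtain c k where g: "g = int_comb bs c + of_int k *\<^sub>R b" using rep by blast
      define q where "q = k div int d"
      define r where "r = k mod int d"
      have kqr: "k = q * int d + r" unfolding q_def r_def by simp
      have r: "0 \<le> r" "r < int d" unfolding r_def using d(1) by auto
      have "g - of_int q *\<^sub>R g0 \<in> G" using sg_diff[OF sgG gG sg_int_scale[OF sgG g0G']] .
      moreover have "g - of_int q *\<^sub>R g0 = int_comb bs (\<lambda>i. c i - q * c0 i) + of_int r *\<^sub>R b"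
        unfolding g g0_def kqr int_comb_lcomb
        by (simp add: lcomb_scale lcomb_diff[symmetric] algebra_simps)
      ultimately have "r \<in> K" unfolding K_def by auto
      then have "r = 0"
      proof (rule contrapos_pp)
        assume "r \<noteq> 0"
        then have "nat r > 0" "nat r < d" using r by auto
        then show "r \<notin> K" using dmin[of "nat r"] r by auto
      qed
      then have "g - of_int q *\<^sub>R g0 \<in> G'"
        unfolding G'_def using \<open>g - of_int q *\<^sub>R g0 \<in> G\<close>
          \<open>g - of_int q *\<^sub>R g0 = int_comb bs (\<lambda>i. c i - q * c0 i) + of_int r *\<^sub>R b\<close> by auto
      then obtain e where "g - of_int q *\<^sub>R g0 = int_comb cs' e" using cs'(2) by auto
      then have "g = int_comb cs (e(?m := q))"
        unfolding cs_def int_comb_upd_snoc by (simp add: algebra_simps)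
      then show "g \<in> range (int_comb cs)" by blast
    qed
    have "lindep cs"
      unfolding cs_def
    proof (rule lindep_snocI[OF cs'(1)])
      fix u a assume ua: "lcomb cs' u + a *\<^sub>R g0 = 0"
      have "lcomb cs' u \<in> lspan bs"
      proof -
        have "set cs' \<subseteq> lspan bs" using cs'(3) range_int_comb_subset_lspan unfolding G'_def by blast
        then have "span (set cs') \<subseteq> lspan bs" using lspan_subspace span_minimal by blast
        then show ?thesis using lcomb_in_span by blast
      qed
      then obtain v where v: "lcomb cs' u = lcomb bs v" unfolding lspan_def by blast
      have "lcomb bs (\<lambda>i. v i + a * of_int (c0 i)) + (a * of_nat d) *\<^sub>R b = 0"
        using ua unfolding v g0_def int_comb_lcomb
        by (simp add: lcomb_add[symmetric] lcomb_scale[symmetric] algebra_simps)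
      then have "a * of_nat d = 0" using lindep_snocD(1)[OF snoc.prems(1)] by blast
      then show "a = 0" using d(1) by simp
    qed
    then show ?thesis using sub1 sub2 setcs by blast
  qed
qed



lemma nth_image_lessThan: "(!) bs ` {..<length bs} = set bs"
  using nth_image[of "length bs" bs] by (simp add: lessThan_atLeast0)

lemma lcomb_as_set_sum:
  fixes bs :: "'a::real_vector list" and u :: "'a \<Rightarrow> real"
  assumes "distinct bs"
  shows "lcomb bs (\<lambda>i. u (bs ! i)) = (\<Sum>v\<in>set bs. u v *\<^sub>R v)"
proof -
  have inj: "inj_on ((!) bs) {..<length bs}" using assms by (simp add: inj_on_def nth_eq_iff_index_eq)
  show ?thesis unfolding lcomb_def nth_image_lessThan[symmetric] sum.reindex[OF inj] by simp
qed

lemma indep_imp_lindep: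
  fixes bs :: "'a::real_vector list"
  assumes "independent (set bs)" "distinct bs"
  shows "lindep bs"
  unfolding lindep_def
proof (intro allI impI)
  fix c i assume c: "lcomb bs c = 0" and i: "i < length bs"
  define u :: "'a \<Rightarrow> real" where "u v = c (THE j. j < length bs \<and> bs ! j = v)" for v
  have uu: "u (bs ! k) = c k" if "k < length bs" for k
  proof -
    have "(THE j. j < length bs \<and> bs ! j = bs ! k) = k"
      using that assms(2) by (auto intro!: the_equality simp: nth_eq_iff_index_eq)
    then show ?thesis by (simp add: u_def)
  qed
  have "lcomb bs (\<lambda>i. u (bs ! i)) = lcomb bs c"
    by (rule lcomb_cong) (simp add: uu)
  then have "(\<Sum>v\<in>set bs. u v *\<^sub>R v) = 0" using c lcomb_as_set_sum[OF assms(2)] by simp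
  then have "\<forall>v\<in>set bs. u v = 0" using assms(1) dependent_finite[of "set bs"] by auto
  then have "u (bs ! i) = 0" using i by simp
  then show "c i = 0" by (simp add: uu i)
qed

lemma lindep_imp_distinct:
  assumes "lindep bs" shows "distinct bs"
proof (rule ccontr)
  assume "\<not> distinct bs"
  then obtain i j where ij: "i < length bs" "j < length bs" "i \<noteq> j" "bs ! i = bs ! j"
    by (auto simp: distinct_conv_nth)
  define c where "c k = (if k = i then 1 else 0) - (if k = j then 1 else (0::real))" for k
  have "lcomb bs c = lcomb bs (\<lambda>k. if k = i then 1 else 0) - lcomb bs (\<lambda>k. if k = j then 1 else 0)"
    unfolding c_def lcomb_diff by simp
  also have "\<dots> = 0" using ij lcomb_nth[of i bs] lcomb_nth[of j bs] by simp
  finally have "c i = 0" using assms ij unfolding lindep_def by blast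
  then show False using ij by (simp add: c_def)
qed

lemma lindep_imp_indep:
  assumes "lindep bs" shows "independent (set bs)"
proof
  assume "dependent (set bs)"
  then obtain u where u: "\<exists>v\<in>set bs. u v \<noteq> 0" "(\<Sum>v\<in>set bs. u v *\<^sub>R v) = 0"
    using dependent_finite by blast
  have "lcomb bs (\<lambda>i. u (bs ! i)) = 0" using u(2) lcomb_as_set_sum[OF lindep_imp_distinct[OF assms]] by simp
  then have "\<forall>i<length bs. u (bs ! i) = 0" using assms unfolding lindep_def by blast
  then show False using u(1) by (auto simp: in_set_conv_nth)
qed



lemma discrete_sg_sep:
  assumes "add_subgroup (G::'a::real_normed_vector set)" "discrete G"
  obtains e where "e > 0" "\<And>x y. x \<in> G \<Longrightarrow> y \<in> G \<Longrightarrow> x \<noteq> y \<Longrightarrow> dist x y \<ge> e"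
proof -
  have "0 isolated_in G" using assms sg_zero discreteD by blast
  then obtain T where T: "open T" "T \<inter> G = {0}" unfolding isolated_in_def by blast
  then obtain e where e: "e > 0" "ball 0 e \<subseteq> T" using open_contains_ball by blast
  have "dist x y \<ge> e" if "x \<in> G" "y \<in> G" "x \<noteq> y" for x y
  proof (rule ccontr)
    assume "\<not> dist x y \<ge> e"
    then have "x - y \<in> ball 0 e" by (simp add: dist_norm norm_minus_commute)
    moreover have "x - y \<in> G" using sg_diff[OF assms(1) that(1,2)] .
    ultimately have "x - y \<in> T \<inter> G" using e by blast
    then show False using T that by auto
  qed
  then show ?thesis using that e by blast
qed

lemma sep_bounded_finite:
  fixes S :: "'a::euclidean_space set"
  assumes "e > 0" "\<And>x y. x \<in> S \<Longrightarrow> y \<in> S \<Longrightarrow> x \<noteq> y \<Longrightarrow> dist x y \<ge> e" "bounded S"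
  shows "finite S"
proof (rule ccontr)
  assume inf: "infinite S"
  obtain r c where "S \<subseteq> cball c r" using assms(3) unfolding bounded_subset_cball by blast
  then obtain x where lp: "x islimpt S" using Heine_Borel_imp_Bolzano_Weierstrass[OF compact_cball inf] by blast
  have e2: "e / 2 > 0" using assms(1) by simp
  obtain x1 where x1: "x1 \<in> S" "x1 \<noteq> x" "dist x1 x < e/2"
    using lp e2 unfolding islimpt_approachable by blast
  have "dist x1 x > 0" using x1(2) by simp
  then have "min (e/2) (dist x1 x) > 0" using e2 by simp
  then obtain x2 where x2: "x2 \<in> S" "x2 \<noteq> x" "dist x2 x < min (e/2) (dist x1 x)"
    using lp unfolding islimpt_approachable by blast
  have "x1 \<noteq> x2" using x2(3) by (metis min_less_iff_conj less_irrefl)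
  moreover have "dist x1 x2 \<le> dist x1 x + dist x2 x" by (metis dist_commute dist_triangle)
  then have "dist x1 x2 < e" using x1(3) x2(3) by linarith
  ultimately show False using assms(2)[OF x1(1) x2(1)] by linarith
qed

lemma lcomb_norm_bound:
  assumes "\<And>i. i < length bs \<Longrightarrow> \<bar>t i\<bar> \<le> 1"
  shows "norm (lcomb bs t) \<le> (\<Sum>i<length bs. norm (bs ! i))"
  unfolding lcomb_def
proof (rule order_trans[OF norm_sum sum_mono])
  fix i assume "i \<in> {..<length bs}"
  then show "norm (t i *\<^sub>R bs ! i) \<le> norm (bs ! i)"
    using assms by (simp add: mult_left_le_one_le)
qed



lemma discrete_sg_scaled:
  fixes G :: "'a::euclidean_space set"
  assumes sg: "add_subgroup G" and disc: "discrete G" and lb: "lindep bs"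
    and setG: "set bs \<subseteq> G" and Gsp: "G \<subseteq> lspan bs"
  shows "\<exists>N::nat. N > 0 \<and> (\<forall>x\<in>G. of_nat N *\<^sub>R x \<in> range (int_comb bs))"
proof -
  let ?n = "length bs"
  obtain e where e: "e > 0" "\<And>x y. x \<in> G \<Longrightarrow> y \<in> G \<Longrightarrow> x \<noteq> y \<Longrightarrow> dist x y \<ge> e"
    using discrete_sg_sep[OF sg disc] by blast
  define P where "P = {x\<in>G. \<exists>t. x = lcomb bs t \<and> (\<forall>i<?n. 0 \<le> t i \<and> t i < 1)}"
  have "bounded P"
  proof -
    have "norm x \<le> (\<Sum>i<?n. norm (bs ! i))" if "x \<in> P" for x
    proof -
      obtain t where t: "x = lcomb bs t" "\<forall>i<?n. 0 \<le> t i \<and> t i < 1" using \<open>x \<in> P\<close> unfolding P_def by blast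
      have "\<And>i. i < ?n \<Longrightarrow> \<bar>t i\<bar> \<le> 1" using t(2) by fastforce
      then show ?thesis unfolding t(1) by (rule lcomb_norm_bound)
    qed
    then show ?thesis unfolding bounded_iff by blast
  qed
  have PG: "P \<subseteq> G" unfolding P_def by blast
  have finP: "finite P"
    by (rule sep_bounded_finite[OF e(1) _ \<open>bounded P\<close>]) (use PG e(2) in blast)
  define N where "N = card P"
  have key: "\<exists>m. 1 \<le> m \<and> m \<le> N \<and> of_nat m *\<^sub>R x \<in> range (int_comb bs)" if xG: "x \<in> G" for x
  proof -
    obtain a where a: "x = lcomb bs a" using xG Gsp unfolding lspan_def by blast
    define p where "p j = lcomb bs (\<lambda>i. frac (of_nat j * a i))" for j :: nat
    define fl where "fl j i = \<lfloor>of_nat j * a i\<rfloor>" for j :: nat and i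
    have p_eq: "p j = of_nat j *\<^sub>R x - int_comb bs (fl j)" for j
      unfolding p_def a int_comb_lcomb fl_def frac_def lcomb_scale lcomb_diff by simp
    have pP: "p j \<in> P" for j
    proof -
      have "p j \<in> G" unfolding p_eq
        using sg_diff[OF sg sg_nat_scale[OF sg xG] sg_int_comb[OF sg setG]] .
      then show ?thesis unfolding P_def
        by (intro CollectI conjI exI[of _ "\<lambda>i. frac (of_nat j * a i)"]) (auto simp: p_def frac_lt_1)
    qed
    have "\<not> inj_on p {0..N}"
    proof
      assume "inj_on p {0..N}"
      moreover have "p ` {0..N} \<subseteq> P" using pP by blast
      ultimately have "card {0..N} \<le> card P" using card_inj_on_le finP by blast
      then show False by (simp add: N_def)
    qed
    then obtain j1 j2 where j: "j1 \<in> {0..N}" "j2 \<in> {0..N}" "j1 < j2" "p j1 = p j2"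
      unfolding inj_on_def by (metis linorder_neqE_nat)
    have "of_nat (j2 - j1) *\<^sub>R x = int_comb bs (\<lambda>i. fl j2 i - fl j1 i)"
      using j(3,4) unfolding p_eq int_comb_diff[symmetric]
      by (simp add: of_nat_diff scaleR_diff_left algebra_simps)
    then show ?thesis using j by (intro exI[of _ "j2 - j1"]) auto
  qed
  have "of_nat (fact N) *\<^sub>R x \<in> range (int_comb bs)" if xG: "x \<in> G" for x
  proof -
    obtain m where m: "1 \<le> m" "m \<le> N" "of_nat m *\<^sub>R x \<in> range (int_comb bs)" using key[OF xG] by blast
    obtain q where q: "fact N = m * q" using dvd_fact[OF m(1,2)] by blast
    have "of_nat (fact N) *\<^sub>R x = of_int (int q) *\<^sub>R (of_nat m *\<^sub>R x)" by (simp add: q)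
    then show ?thesis using sg_int_scale[OF sg_range_int_comb m(3)] by metis
  qed
  moreover have "(fact N :: nat) > 0" by simp
  ultimately show ?thesis by blast
qed

lemma discrete_sg_basis:
  fixes G :: "'a::euclidean_space set"
  assumes sg: "add_subgroup G" and disc: "discrete G"
  shows "\<exists>ls. lindep ls \<and> G = range (int_comb ls) \<and> set ls \<subseteq> G"
proof -
  obtain S where S: "S \<subseteq> G" "independent S" "G \<subseteq> span S" using maximal_independent_subset by blast
  have "finite S" using S(2) finiteI_independent by blast
  then obtain bs where bs: "set bs = S" "distinct bs" using finite_distinct_list by blast
  have lb: "lindep bs" using indep_imp_lindep S bs by blast
  have Gsp: "G \<subseteq> lspan bs" using S bs lspan_eq_span by blast
  obtain N :: nat where N: "N > 0" "\<forall>x\<in>G. of_nat N *\<^sub>R x \<in> range (int_comb bs)"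
    using discrete_sg_scaled[OF sg disc lb _ Gsp] S bs by blast
  define bs' where "bs' = map (\<lambda>b. (1 / of_nat N) *\<^sub>R b) bs"
  have lin: "linear (\<lambda>b::'a. (1 / of_nat N) *\<^sub>R b)" by (simp add: linear_iff scaleR_add_right)
  have lb': "lindep bs'"
    unfolding lindep_def
  proof (intro allI impI)
    fix c i assume "lcomb bs' c = 0" "i < length bs'"
    then have "(1 / of_nat N) *\<^sub>R lcomb bs c = 0" "i < length bs"
      unfolding bs'_def lcomb_map[OF lin, symmetric] by auto
    then show "c i = 0" using lb N(1) unfolding lindep_def by auto
  qed
  have "G \<subseteq> range (int_comb bs')"
  proof
    fix x assume "x \<in> G"
    then obtain c where c: "of_nat N *\<^sub>R x = int_comb bs c" using N(2) by blast
    have "x = (1 / of_nat N) *\<^sub>R (of_nat N *\<^sub>R x)" using N(1) by simp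
    also have "\<dots> = int_comb bs' c" unfolding c bs'_def int_comb_lcomb lcomb_map[OF lin] ..
    finally show "x \<in> range (int_comb bs')" by blast
  qed
  from subgroup_basis[OF lb' sg this] show ?thesis .
qed



lemma bil_sum_right:
  assumes "bilinear B" shows "B y (sum f I) = (\<Sum>i\<in>I. B y (f i))"
proof -
  have lin: "linear (\<lambda>x. B y x)" using assms by (simp add: bilinear_def)
  show ?thesis using linear_sum[OF lin] by simp
qed

lemma riesz_B:
  fixes B :: "'h::euclidean_space \<Rightarrow> 'h \<Rightarrow> real"
  assumes bil: "bilinear B" and nondeg: "\<And>x. (\<forall>y. B x y = 0) \<Longrightarrow> x = 0" and g: "linear g"
  shows "\<exists>y. \<forall>x. B y x = g x"
proof -
  define M where "M y = (\<Sum>b\<in>Basis. B y b *\<^sub>R b)" for y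
  have rep: "B y x = M y \<bullet> x" for y x
  proof -
    have "B y x = B y (\<Sum>b\<in>Basis. (x \<bullet> b) *\<^sub>R b)" by (simp add: euclidean_representation)
    also have "\<dots> = (\<Sum>b\<in>Basis. (x \<bullet> b) * B y b)"
      by (simp add: bil_sum_right[OF bil] bilinear_rmul[OF bil])
    also have "\<dots> = M y \<bullet> x" unfolding M_def inner_sum_left
      by (simp add: inner_commute mult.commute)
    finally show ?thesis .
  qed
  have linM: "linear M"
    unfolding linear_iff M_def
    by (simp add: bilinear_ladd[OF bil] bilinear_lmul[OF bil] scaleR_add_left sum.distrib scaleR_sum_right)
  have "inj M"
  proof (rule injI)
    fix y z assume "M y = M z"
    then have "B y x = B z x" for x by (simp add: rep)
    then have "\<forall>x. B (y - z) x = 0" by (simp add: bilinear_lsub[OF bil])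
    then show "y = z" using nondeg by fastforce
  qed
  then have "surj M" using linear_injective_imp_surjective[OF linM] by simp
  define w where "w = (\<Sum>b\<in>Basis. g b *\<^sub>R b)"
  have gw: "g x = w \<bullet> x" for x
  proof -
    have "g x = g (\<Sum>b\<in>Basis. (x \<bullet> b) *\<^sub>R b)" by (simp add: euclidean_representation)
    also have "\<dots> = (\<Sum>b\<in>Basis. (x \<bullet> b) * g b)"
      by (simp add: linear_sum[OF g] linear_scale[OF g])
    also have "\<dots> = w \<bullet> x" unfolding w_def inner_sum_left by (simp add: inner_commute mult.commute)
    finally show ?thesis .
  qed
  obtain y where "M y = w" using \<open>surj M\<close> by (metis surjD)
  then show ?thesis using rep gw by metis
qed

lemma dual_vec:
  fixes B :: "'h::euclidean_space \<Rightarrow> 'h \<Rightarrow> real"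
  assumes bil: "bilinear B" and nondeg: "\<And>x. (\<forall>y. B x y = 0) \<Longrightarrow> x = 0" and lc: "lindep cs"
  shows "\<exists>y. \<forall>j<length cs. B y (cs ! j) = t j"
proof -
  define f where "f v = t (THE j. j < length cs \<and> cs ! j = v)" for v
  have dist: "distinct cs" using lindep_imp_distinct[OF lc] .
  have fj: "f (cs ! k) = t k" if "k < length cs" for k
  proof -
    have "(THE j. j < length cs \<and> cs ! j = cs ! k) = k"
      using that dist by (auto intro!: the_equality simp: nth_eq_iff_index_eq)
    then show ?thesis by (simp add: f_def)
  qed
  obtain g :: "'h \<Rightarrow> real" where g: "linear g" "\<forall>x\<in>set cs. g x = f x"
    using linear_independent_extend[OF lindep_imp_indep[OF lc]] by blast
  obtain y where y: "\<forall>x. B y x = g x" using riesz_B[OF bil nondeg g(1)] by blast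
  show ?thesis using y g(2) fj by (metis nth_mem)
qed

lemma linear_surj_on_subspace:
  fixes f :: "'a::euclidean_space \<Rightarrow> 'a"
  assumes "linear f" "subspace S" "f ` S \<subseteq> S" "inj_on f S"
  shows "f ` S = S"
proof -
  have "span S = S" using assms(2) span_eq_iff by blast
  then have "dim (f ` S) = dim S" using dim_image_eq[OF assms(1)] assms(4) by metis
  then show ?thesis
    using subspace_dim_equal[OF linear_subspace_image[OF assms(1,2)] assms(2,3)] by simp
qed



lemma lcomb_zero_cond: "(\<And>i. i < length bs \<Longrightarrow> c i = 0) \<Longrightarrow> lcomb bs c = 0"
  using lcomb_cong[of bs c "\<lambda>_. 0"] lcomb_zero by metis

locale lat0 =
  fixes B :: "'h::euclidean_space \<Rightarrow> 'h \<Rightarrow> real" and L :: "'h set"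
  assumes bil: "bilinear B"
    and Bsym: "\<And>x y. B x y = B y x"
    and nondeg: "\<And>x. (\<forall>y. B x y = 0) \<Longrightarrow> x = 0"
    and sg: "add_subgroup L"
    and disc: "discrete L"
    and even: "\<And>a. a \<in> L \<Longrightarrow> \<exists>k::int. B a a = 2 * of_int k"
begin

lemma integral: assumes "a \<in> L" "b \<in> L" shows "B a b \<in> \<int>"
proof -
  obtain k1 k2 k3 :: int where k: "B (a+b) (a+b) = 2 * of_int k1" "B a a = 2 * of_int k2" "B b b = 2 * of_int k3"
    using even assms sg_add[OF sg] by metis
  have "B (a+b) (a+b) = B a a + 2 * B a b + B b b"
    using Bsym[of a b] by (simp add: bilinear_ladd[OF bil] bilinear_radd[OF bil])
  then have "B a b = of_int (k1 - k2 - k3)" using k by simp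
  then show ?thesis by simp
qed

lemma int_of_Ints: "(x::real) \<in> \<int> \<Longrightarrow> of_int \<lfloor>x\<rfloor> = x"
  by (metis Ints_cases floor_of_int)

lemma basis_exists:
  "\<exists>rs ss. set rs \<subseteq> L \<and> set ss \<subseteq> L \<and> radical B L = range (int_comb rs) \<and>
     L \<subseteq> {int_comb rs c1 + int_comb ss c2 | c1 c2. True} \<and>
     lindep (rs @ ss) \<and> lindep ss \<and>
     (\<forall>w\<in>lspan ss. (\<forall>j<length ss. B w (ss ! j) = 0) \<longrightarrow> w = 0)"
proof -
  obtain ls where ls: "lindep ls" "L = range (int_comb ls)" "set ls \<subseteq> L"
    using discrete_sg_basis[OF sg disc] by blast
  define phi where "phi x = lcomb ls (\<lambda>j. B x (ls ! j))" for x
  have linphi: "linear phi"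
    unfolding linear_iff phi_def
    by (simp add: bilinear_ladd[OF bil] bilinear_lmul[OF bil] lcomb_add lcomb_scale)
  have phi0: "\<forall>w\<in>L. B x w = 0" if "phi x = 0" for x
  proof
    fix w assume "w \<in> L"
    then obtain c where c: "w = int_comb ls c" using ls(2) by blast
    have "\<forall>j<length ls. B x (ls ! j) = 0"
      using that ls(1) unfolding phi_def lindep_def by blast
    then show "B x w = 0" unfolding c int_comb_lcomb bil_lcomb_right[OF bil] by simp
  qed
  have phiL: "phi ` L \<subseteq> range (int_comb ls)"
  proof
    fix y assume "y \<in> phi ` L"
    then obtain x where x: "x \<in> L" "y = phi x" by blast
    have "B x (ls ! j) \<in> \<int>" if "j < length ls" for j
      using integral[OF x(1)] ls(3) that by (meson nth_mem subsetD)
    then have "y = int_comb ls (\<lambda>j. \<lfloor>B x (ls ! j)\<rfloor>)"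
      unfolding x(2) phi_def int_comb_lcomb by (intro lcomb_cong) (simp add: int_of_Ints)
    then show "y \<in> range (int_comb ls)" by blast
  qed
  have sgphi: "add_subgroup (phi ` L)"
    unfolding add_subgroup_def
  proof (intro conjI ballI)
    show "0 \<in> phi ` L" using sg_zero[OF sg] linear_0[OF linphi] by (metis image_eqI)
  next
    fix x y assume "x \<in> phi ` L" "y \<in> phi ` L"
    then show "x + y \<in> phi ` L" using sg_add[OF sg] linear_add[OF linphi] by (smt (verit) image_iff)
  next
    fix x assume "x \<in> phi ` L"
    then show "- x \<in> phi ` L" using sg_neg[OF sg] linear_neg[OF linphi] by (metis image_iff)
  qed
  obtain es where es: "lindep es" "phi ` L = range (int_comb es)" "set es \<subseteq> phi ` L"
    using subgroup_basis[OF ls(1) sgphi phiL] by blast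
  define ss where "ss = map (\<lambda>e. SOME x. x \<in> L \<and> phi x = e) es"
  have ss_len: "length ss = length es" by (simp add: ss_def)
  have ss_prop: "ss ! i \<in> L \<and> phi (ss ! i) = es ! i" if "i < length es" for i
  proof -
    have "es ! i \<in> phi ` L" using es(3) that nth_mem by blast
    then have "\<exists>x. x \<in> L \<and> phi x = es ! i" by (metis imageE)
    from someI_ex[OF this] show ?thesis unfolding ss_def using that by simp
  qed
  have ssL: "set ss \<subseteq> L" using ss_prop ss_len by (auto simp: in_set_conv_nth)
  have map_ss: "map phi ss = es" using ss_prop ss_len by (intro nth_equalityI) auto
  have phi_ss: "phi (lcomb ss u) = lcomb es u" for u
    using lcomb_map[OF linphi] map_ss by metis
  have radL: "radical B L \<subseteq> L" by (auto simp: radical_def)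
  have sgrad: "add_subgroup (radical B L)"
    unfolding add_subgroup_def radical_def
    by (auto simp: sg_zero[OF sg] sg_add[OF sg] sg_neg[OF sg] bilinear_lzero[OF bil]
        bilinear_ladd[OF bil] bilinear_lneg[OF bil])
  obtain rs where rs: "lindep rs" "radical B L = range (int_comb rs)" "set rs \<subseteq> radical B L"
    using subgroup_basis[OF ls(1) sgrad] radL ls(2) by blast
  have rsL: "set rs \<subseteq> L" using rs(3) radL by blast
  have phi_rad: "phi r = 0" if "r \<in> radical B L" for r
  proof -
    have "\<forall>j<length ls. B r (ls ! j) = 0" using that ls(3) unfolding radical_def by (auto intro: nth_mem)
    then show ?thesis unfolding phi_def by (simp add: lcomb_zero_cond)
  qed
  have phi_rs: "phi (lcomb rs u) = 0" for u
  proof -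
    have "phi (lcomb rs u) = lcomb (map phi rs) u" using lcomb_map[OF linphi] .
    also have "map phi rs = map (\<lambda>_. 0) rs" using phi_rad rs(3) by (intro map_cong) auto
    also have "lcomb (map (\<lambda>_. 0) rs) u = 0" by (simp add: lcomb_def)
    finally show ?thesis .
  qed
  have decomp: "L \<subseteq> {int_comb rs c1 + int_comb ss c2 | c1 c2. True}"
  proof
    fix x assume xL: "x \<in> L"
    then obtain c where c: "phi x = int_comb es c" using es(2) by blast
    have "phi (x - int_comb ss c) = 0"
      using c phi_ss[of "\<lambda>i. of_int (c i)"] linear_diff[OF linphi] by (simp add: int_comb_lcomb)
    moreover have "x - int_comb ss c \<in> L" using sg_diff[OF sg xL sg_int_comb[OF sg ssL]] .
    ultimately have "x - int_comb ss c \<in> radical B L" using phi0 by (auto simp: radical_def)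
    then obtain c1 where "x - int_comb ss c = int_comb rs c1" using rs(2) by blast
    then have "x = int_comb rs c1 + int_comb ss c" by (simp add: algebra_simps)
    then show "x \<in> {int_comb rs c1 + int_comb ss c2 | c1 c2. True}" by blast
  qed
  have lss: "lindep ss"
    unfolding lindep_def
  proof (intro allI impI)
    fix u i assume "lcomb ss u = 0" "i < length ss"
    then have "lcomb es u = 0" using phi_ss linear_0[OF linphi] by metis
    then show "u i = 0" using es(1) \<open>i < length ss\<close> ss_len unfolding lindep_def by auto
  qed
  have lrsss: "lindep (rs @ ss)"
    unfolding lindep_def
  proof (intro allI impI)
    fix c i assume c: "lcomb (rs @ ss) c = 0" and i: "i < length (rs @ ss)"
    let ?u = "\<lambda>i. c (length rs + i)"
    have "lcomb rs c + lcomb ss ?u = 0" using c by (simp add: lcomb_append)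
    then have "phi (lcomb rs c) + phi (lcomb ss ?u) = 0" using linear_add[OF linphi] linear_0[OF linphi] by metis
    then have "lcomb es ?u = 0" using phi_rs phi_ss by simp
    then have u0: "\<forall>j<length ss. ?u j = 0" using es(1) ss_len unfolding lindep_def by auto
    then have "lcomb ss ?u = 0" by (simp add: lcomb_def)
    then have "lcomb rs c = 0" using \<open>lcomb rs c + lcomb ss ?u = 0\<close> by simp
    then have r0: "\<forall>j<length rs. c j = 0" using rs(1) unfolding lindep_def by auto
    show "c i = 0"
    proof (cases "i < length rs")
      case True then show ?thesis using r0 by simp
    next
      case False
      then obtain j where "i = length rs + j" "j < length ss" using i by (metis add_diff_inverse_nat length_append nat_add_left_cancel_less)
      then show ?thesis using u0 by simp
    qed
  qed
  have nd: "w = 0" if w: "w \<in> lspan ss" "\<forall>j<length ss. B w (ss ! j) = 0" for w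
  proof -
    obtain u where u: "w = lcomb ss u" using w(1) unfolding lspan_def by blast
    have "B w a = 0" if "a \<in> L" for a
    proof -
      obtain c1 c2 where a: "a = int_comb rs c1 + int_comb ss c2" using decomp \<open>a \<in> L\<close> by blast
      have "B w (rs ! j) = 0" if "j < length rs" for j
      proof -
        have "rs ! j \<in> radical B L" using rs(3) that nth_mem by blast
        then have "\<forall>k<length ss. B (rs ! j) (ss ! k) = 0" using ssL unfolding radical_def by (auto intro: nth_mem)
        then show ?thesis unfolding u Bsym[of _ "rs ! j"] bil_lcomb_right[OF bil] by simp
      qed
      then show ?thesis using w(2) unfolding a int_comb_lcomb bilinear_radd[OF bil] bil_lcomb_right[OF bil]
        by simp
    qed
    then have "phi w = 0" unfolding phi_def using ls(3) by (intro lcomb_zero_cond) (auto intro: nth_mem)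
    then have "lcomb es u = 0" using phi_ss u by simp
    then have "\<forall>i<length ss. u i = 0" using es(1) ss_len unfolding lindep_def by auto
    then show ?thesis unfolding u by (simp add: lcomb_def)
  qed
  show ?thesis using rsL ssL rs(2) decomp lrsss lss nd by blast
qed

end



lemma lcomb_B_delta:
  fixes B :: "'a::real_vector \<Rightarrow> 'b::real_vector \<Rightarrow> real"
  assumes bil: "bilinear B" and "\<And>i. i < length xs \<Longrightarrow> B (xs ! i) y = (if i = j then 1 else 0)" "j < length xs"
  shows "B (lcomb xs a) y = a j"
  unfolding bil_lcomb_left[OF bil] using assms(2) sum_delta_nat[OF assms(3), of a] by simp

lemma lcomb_B_zero:
  fixes B :: "'a::real_vector \<Rightarrow> 'b::real_vector \<Rightarrow> real"
  assumes bil: "bilinear B" and "\<And>i. i < length xs \<Longrightarrow> B (xs ! i) y = 0"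
  shows "B (lcomb xs a) y = 0"
  unfolding bil_lcomb_left[OF bil] using assms(2) by simp

lemma B_lcomb_zero:
  fixes B :: "'a::real_vector \<Rightarrow> 'b::real_vector \<Rightarrow> real"
  assumes bil: "bilinear B" and "\<And>i. i < length xs \<Longrightarrow> B y (xs ! i) = 0"
  shows "B y (lcomb xs a) = 0"
  unfolding bil_lcomb_right[OF bil] using assms(2) by simp

locale lat1 = lat0 +
  fixes rs ss :: "'h::euclidean_space list"
  assumes rsL: "set rs \<subseteq> L" and ssL: "set ss \<subseteq> L"
    and rad: "radical B L = range (int_comb rs)"
    and decomp: "L \<subseteq> {int_comb rs c1 + int_comb ss c2 | c1 c2. True}"
    and lrsss: "lindep (rs @ ss)" and lss: "lindep ss"
    and ndS: "\<And>w. w \<in> lspan ss \<Longrightarrow> (\<forall>j<length ss. B w (ss ! j) = 0) \<Longrightarrow> w = 0"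
begin

lemma rs_rad: "i < length rs \<Longrightarrow> rs ! i \<in> radical B L"
  using rad set_subset_range_int_comb[of rs] nth_mem by blast

lemma B_r_L: "i < length rs \<Longrightarrow> w \<in> L \<Longrightarrow> B (rs ! i) w = 0"
  using rs_rad unfolding radical_def by blast

lemma B_r_r: "i < length rs \<Longrightarrow> j < length rs \<Longrightarrow> B (rs ! i) (rs ! j) = 0"
  using B_r_L rsL nth_mem by blast

lemma B_r_s: "i < length rs \<Longrightarrow> j < length ss \<Longrightarrow> B (rs ! i) (ss ! j) = 0"
  using B_r_L ssL nth_mem by blast

lemma B_r_lspan_ss: "i < length rs \<Longrightarrow> y \<in> lspan ss \<Longrightarrow> B (rs ! i) y = 0"
  unfolding lspan_def using B_lcomb_zero[OF bil] B_r_s by blast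

lemma B_r_lspan_rs: "i < length rs \<Longrightarrow> y \<in> lspan rs \<Longrightarrow> B (rs ! i) y = 0"
  unfolding lspan_def using B_lcomb_zero[OF bil] B_r_r by blast

lemma L_rep: "a \<in> L \<Longrightarrow> \<exists>c1 c2. a = int_comb rs c1 + int_comb ss c2"
  using decomp by blast

lemma dual_char:
  "x \<in> dual_lattice B L \<longleftrightarrow> (\<forall>j<length rs. B x (rs ! j) \<in> \<int>) \<and> (\<forall>j<length ss. B x (ss ! j) \<in> \<int>)"
proof
  assume "x \<in> dual_lattice B L"
  then show "(\<forall>j<length rs. B x (rs ! j) \<in> \<int>) \<and> (\<forall>j<length ss. B x (ss ! j) \<in> \<int>)"
    unfolding dual_lattice_def using rsL ssL nth_mem by blast
next
  assume as: "(\<forall>j<length rs. B x (rs ! j) \<in> \<int>) \<and> (\<forall>j<length ss. B x (ss ! j) \<in> \<int>)"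
  show "x \<in> dual_lattice B L"
    unfolding dual_lattice_def
  proof (intro CollectI ballI)
    fix a assume "a \<in> L"
    then obtain c1 c2 where a: "a = int_comb rs c1 + int_comb ss c2" using L_rep by blast
    show "B x a \<in> \<int>"
      unfolding a int_comb_lcomb bilinear_radd[OF bil] bil_lcomb_right[OF bil]
      using as by (intro Ints_add Ints_sum Ints_mult) auto
  qed
qed

lemma perp_char:
  "x \<in> perp_space B L \<longleftrightarrow> (\<forall>j<length rs. B x (rs ! j) = 0) \<and> (\<forall>j<length ss. B x (ss ! j) = 0)"
proof
  assume "x \<in> perp_space B L"
  then show "(\<forall>j<length rs. B x (rs ! j) = 0) \<and> (\<forall>j<length ss. B x (ss ! j) = 0)"
    unfolding perp_space_def using rsL ssL nth_mem by blast
next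
  assume as: "(\<forall>j<length rs. B x (rs ! j) = 0) \<and> (\<forall>j<length ss. B x (ss ! j) = 0)"
  show "x \<in> perp_space B L"
    unfolding perp_space_def
  proof (intro CollectI ballI)
    fix a assume "a \<in> L"
    then obtain c1 c2 where a: "a = int_comb rs c1 + int_comb ss c2" using L_rep by blast
    show "B x a = 0"
      unfolding a int_comb_lcomb bilinear_radd[OF bil] bil_lcomb_right[OF bil]
      using as by simp
  qed
qed

end



context lat1 begin

definition f0 :: "nat \<Rightarrow> 'h" where
  "f0 i = (SOME y. \<forall>j<length (rs @ ss). B y ((rs @ ss) ! j) = (if j = i then 1 else 0))"

lemma f0_prop: "\<forall>j<length (rs @ ss). B (f0 i) ((rs @ ss) ! j) = (if j = i then 1 else 0)"
  unfolding f0_def by (rule someI_ex) (rule dual_vec[OF bil nondeg lrsss])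

lemma f0_r: "i < length rs \<Longrightarrow> j < length rs \<Longrightarrow> B (f0 i) (rs ! j) = (if j = i then 1 else 0)"
proof -
  assume a: "i < length rs" "j < length rs"
  have "(rs @ ss) ! j = rs ! j" using a by (simp add: nth_append)
  moreover have "j < length (rs @ ss)" using a by simp
  ultimately show ?thesis using f0_prop[of i] by metis
qed

lemma f0_s: "i < length rs \<Longrightarrow> j < length ss \<Longrightarrow> B (f0 i) (ss ! j) = 0"
proof -
  assume a: "i < length rs" "j < length ss"
  have "length rs + j < length (rs @ ss)" using a by simp
  then have "B (f0 i) ((rs @ ss) ! (length rs + j)) = (if length rs + j = i then 1 else 0)"
    using f0_prop[of i] by blast
  then show ?thesis using a by simp
qed

definition fv :: "nat \<Rightarrow> 'h" where
  "fv i = f0 i - (1/2) *\<^sub>R lcomb rs (\<lambda>k. B (f0 i) (f0 k))"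

definition fs :: "'h list" where "fs = map fv [0..<length rs]"

lemma fs_len[simp]: "length fs = length rs" by (simp add: fs_def)
lemma fs_nth: "i < length rs \<Longrightarrow> fs ! i = fv i" by (simp add: fs_def)

lemma B_rcomb_r: "j < length rs \<Longrightarrow> B (lcomb rs c) (rs ! j) = 0"
  using lcomb_B_zero[OF bil] B_r_r by blast

lemma B_rcomb_s: "j < length ss \<Longrightarrow> B (lcomb rs c) (ss ! j) = 0"
  using lcomb_B_zero[OF bil] B_r_s by blast

lemma fv_r: "i < length rs \<Longrightarrow> j < length rs \<Longrightarrow> B (fv i) (rs ! j) = (if j = i then 1 else 0)"
  unfolding fv_def bilinear_lsub[OF bil] bilinear_lmul[OF bil] by (simp add: B_rcomb_r f0_r)

lemma fv_s: "i < length rs \<Longrightarrow> j < length ss \<Longrightarrow> B (fv i) (ss ! j) = 0"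
  unfolding fv_def bilinear_lsub[OF bil] bilinear_lmul[OF bil] by (simp add: B_rcomb_s f0_s)

lemma f0_rcomb: "i < length rs \<Longrightarrow> B (f0 i) (lcomb rs c) = c i"
proof -
  assume i: "i < length rs"
  have "B (f0 i) (lcomb rs c) = B (lcomb rs c) (f0 i)" by (rule Bsym)
  also have "\<dots> = c i"
    using i by (intro lcomb_B_delta[OF bil]) (simp_all add: Bsym[of "rs ! _"] f0_r)
  finally show ?thesis .
qed

lemma rcomb_rcomb: "B (lcomb rs a) (lcomb rs c) = 0"
  using lcomb_B_zero[OF bil] B_r_lspan_rs by (auto simp: lspan_def)

lemma fv_fv: "i < length rs \<Longrightarrow> k < length rs \<Longrightarrow> B (fv i) (fv k) = 0"
proof -
  assume i: "i < length rs" and k: "k < length rs"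
  have "B (fv i) (fv k) = B (f0 i) (f0 k) - (1/2) * B (f0 i) (lcomb rs (\<lambda>l. B (f0 k) (f0 l)))
      - (1/2) * B (lcomb rs (\<lambda>l. B (f0 i) (f0 l))) (f0 k)
      + (1/2) * (1/2) * B (lcomb rs (\<lambda>l. B (f0 i) (f0 l))) (lcomb rs (\<lambda>l. B (f0 k) (f0 l)))"
    unfolding fv_def bilinear_lsub[OF bil] bilinear_rsub[OF bil] bilinear_lmul[OF bil] bilinear_rmul[OF bil]
    by (simp add: algebra_simps)
  also have "\<dots> = B (f0 i) (f0 k) - (1/2) * B (f0 k) (f0 i) - (1/2) * B (f0 i) (f0 k)"
  proof -
    have h1: "B (f0 i) (lcomb rs (\<lambda>l. B (f0 k) (f0 l))) = B (f0 k) (f0 i)" using f0_rcomb[OF i] .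
    have h2: "B (lcomb rs (\<lambda>l. B (f0 i) (f0 l))) (f0 k) = B (f0 i) (f0 k)"
      using f0_rcomb[OF k, of "\<lambda>l. B (f0 i) (f0 l)"] Bsym by metis
    show ?thesis unfolding h1 h2 rcomb_rcomb by simp
  qed
  also have "\<dots> = 0" using Bsym[of "f0 i" "f0 k"] by simp
  finally show ?thesis .
qed

end



context lat1 begin

lemma fs_r: "i < length rs \<Longrightarrow> j < length rs \<Longrightarrow> B (fs ! i) (rs ! j) = (if j = i then 1 else 0)"
  by (simp add: fs_nth fv_r)
lemma fs_s: "i < length rs \<Longrightarrow> j < length ss \<Longrightarrow> B (fs ! i) (ss ! j) = 0"
  by (simp add: fs_nth fv_s)
lemma fs_fs: "i < length rs \<Longrightarrow> j < length rs \<Longrightarrow> B (fs ! i) (fs ! j) = 0"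
  by (simp add: fs_nth fv_fv)
lemma fs_lspan_ss: "i < length rs \<Longrightarrow> y \<in> lspan ss \<Longrightarrow> B (fs ! i) y = 0"
  unfolding lspan_def using B_lcomb_zero[OF bil] fs_s by blast

definition Psi :: "'h \<Rightarrow> 'h" where "Psi y = lcomb ss (\<lambda>j. B y (ss ! j))"

lemma linPsi: "linear Psi"
  unfolding linear_iff Psi_def
  by (simp add: bilinear_ladd[OF bil] bilinear_lmul[OF bil] lcomb_add lcomb_scale)

lemma Psi_surj: "Psi ` lspan ss = lspan ss"
proof (rule linear_surj_on_subspace[OF linPsi lspan_subspace])
  show "Psi ` lspan ss \<subseteq> lspan ss" by (auto simp: Psi_def lspan_def)
  show "inj_on Psi (lspan ss)"
  proof (rule inj_onI)
    fix y z assume yz: "y \<in> lspan ss" "z \<in> lspan ss" "Psi y = Psi z"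
    have "Psi (y - z) = 0" using yz(3) linear_diff[OF linPsi] by simp
    then have "\<forall>j<length ss. B (y - z) (ss ! j) = 0"
      using lss unfolding Psi_def lindep_def by blast
    moreover have "y - z \<in> lspan ss" using yz(1,2) lspan_subspace subspace_diff by blast
    ultimately have "y - z = 0" using ndS by blast
    then show "y = z" by simp
  qed
qed

definition dv :: "nat \<Rightarrow> 'h" where "dv i = (SOME y. y \<in> lspan ss \<and> Psi y = ss ! i)"

lemma dv_prop: "i < length ss \<Longrightarrow> dv i \<in> lspan ss \<and> Psi (dv i) = ss ! i"
proof -
  assume i: "i < length ss"
  have "ss ! i \<in> lspan ss" unfolding lspan_eq_span using i by (simp add: span_base)
  then have "\<exists>y. y \<in> lspan ss \<and> Psi y = ss ! i" using Psi_surj by (metis imageE)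
  then show ?thesis unfolding dv_def by (rule someI_ex)
qed

lemma dv_s: "i < length ss \<Longrightarrow> j < length ss \<Longrightarrow> B (dv i) (ss ! j) = (if j = i then 1 else 0)"
proof -
  assume i: "i < length ss" and j: "j < length ss"
  have "lcomb ss (\<lambda>j. B (dv i) (ss ! j)) = lcomb ss (\<lambda>j. if j = i then 1 else 0)"
    using dv_prop[OF i] lcomb_nth[OF i] unfolding Psi_def by simp
  from lindep_unique[OF lss this j] show ?thesis .
qed

definition ds :: "'h list" where "ds = map dv [0..<length ss]"

lemma ds_len[simp]: "length ds = length ss" by (simp add: ds_def)
lemma ds_nth: "i < length ss \<Longrightarrow> ds ! i = dv i" by (simp add: ds_def)
lemma ds_s: "i < length ss \<Longrightarrow> j < length ss \<Longrightarrow> B (ds ! i) (ss ! j) = (if j = i then 1 else 0)"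
  by (simp add: ds_nth dv_s)
lemma ds_lspan: "i < length ss \<Longrightarrow> ds ! i \<in> lspan ss"
  by (simp add: ds_nth dv_prop)
lemma ds_r: "i < length ss \<Longrightarrow> j < length rs \<Longrightarrow> B (ds ! i) (rs ! j) = 0"
  using B_r_lspan_ss ds_lspan Bsym by metis
lemma ds_f: "i < length ss \<Longrightarrow> j < length rs \<Longrightarrow> B (ds ! i) (fs ! j) = 0"
  using fs_lspan_ss ds_lspan Bsym by metis
lemma D_lspan: "lcomb ds c \<in> lspan ss"
proof -
  have "set ds \<subseteq> lspan ss" using ds_lspan by (auto simp: in_set_conv_nth)
  then have "span (set ds) \<subseteq> lspan ss" using lspan_subspace span_minimal by blast
  then show ?thesis using lcomb_in_span by blast
qed

end



lemma list2_eq: "length xs = 2 \<Longrightarrow> xs = [xs ! 0, xs ! 1]"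
  by (cases xs; cases "tl xs") auto

lemma list4_eq: "length xs = 4 \<Longrightarrow> xs = [xs ! 0, xs ! 1, xs ! 2, xs ! 3]"
  by (auto simp: numeral_eq_Suc length_Suc_conv)

lemma internal_dsum2I:
  fixes A1 A2 C :: "'a::ab_group_add set"
  assumes cl: "\<And>a b. a \<in> A1 \<Longrightarrow> b \<in> A2 \<Longrightarrow> a + b \<in> C"
    and ex: "\<And>x. x \<in> C \<Longrightarrow> \<exists>a b. a \<in> A1 \<and> b \<in> A2 \<and> a + b = x"
    and un: "\<And>a b a' b'. a \<in> A1 \<Longrightarrow> b \<in> A2 \<Longrightarrow> a' \<in> A1 \<Longrightarrow> b' \<in> A2 \<Longrightarrow>
              a + b = a' + b' \<Longrightarrow> a = a' \<and> b = b'"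
  shows "internal_dsum [A1, A2] C"
  unfolding internal_dsum_def
proof (intro conjI allI impI ballI)
  fix xs :: "'a list" assume "length xs = length [A1, A2] \<and> (\<forall>i<length [A1, A2]. xs ! i \<in> [A1, A2] ! i)"
  then have "length xs = 2" "xs ! 0 \<in> A1" "xs ! 1 \<in> A2" by auto
  then show "sum_list xs \<in> C" using list2_eq[of xs] cl by (metis sum_list.Cons sum_list.Nil add_0_right)
next
  fix x assume "x \<in> C"
  then obtain a b where ab: "a \<in> A1" "b \<in> A2" "a + b = x" using ex by blast
  show "\<exists>!xs. length xs = length [A1, A2] \<and> (\<forall>i<length [A1, A2]. xs ! i \<in> [A1, A2] ! i) \<and> sum_list xs = x"
  proof (rule ex1I[of _ "[a, b]"])
    show "length [a, b] = length [A1, A2] \<and> (\<forall>i<length [A1, A2]. [a, b] ! i \<in> [A1, A2] ! i) \<and> sum_list [a, b] = x"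
      using ab by (auto simp: less_Suc_eq nth_Cons')
  next
    fix ys assume ys: "length ys = length [A1, A2] \<and> (\<forall>i<length [A1, A2]. ys ! i \<in> [A1, A2] ! i) \<and> sum_list ys = x"
    then have "length ys = 2" "ys ! 0 \<in> A1" "ys ! 1 \<in> A2" by auto
    moreover have "ys ! 0 + ys ! 1 = x" using ys list2_eq[of ys] by (metis \<open>length ys = 2\<close> sum_list.Cons sum_list.Nil add_0_right)
    ultimately have "ys ! 0 = a" "ys ! 1 = b" using un[of "ys ! 0" "ys ! 1" a b] ab by auto
    then show "ys = [a, b]" using list2_eq[OF \<open>length ys = 2\<close>] by simp
  qed
qed

lemma sel4:
  assumes "\<forall>i<length [A1, A2, A3, A4]. xs ! i \<in> [A1, A2, A3, A4] ! i"
  shows "xs ! 0 \<in> A1" "xs ! 1 \<in> A2" "xs ! 2 \<in> A3" "xs ! 3 \<in> A4"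
proof -
  have "\<And>i. i < 4 \<Longrightarrow> xs ! i \<in> [A1, A2, A3, A4] ! i" using assms by simp
  from this[of 0] this[of 1] this[of 2] this[of 3] show
    "xs ! 0 \<in> A1" "xs ! 1 \<in> A2" "xs ! 2 \<in> A3" "xs ! 3 \<in> A4" by simp_all
qed

lemma internal_dsum4I:
  fixes A1 A2 A3 A4 C :: "'a::ab_group_add set"
  assumes cl: "\<And>a b c d. a \<in> A1 \<Longrightarrow> b \<in> A2 \<Longrightarrow> c \<in> A3 \<Longrightarrow> d \<in> A4 \<Longrightarrow> a + b + c + d \<in> C"
    and ex: "\<And>x. x \<in> C \<Longrightarrow> \<exists>a b c d. a \<in> A1 \<and> b \<in> A2 \<and> c \<in> A3 \<and> d \<in> A4 \<and> a + b + c + d = x"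
    and un: "\<And>a b c d a' b' c' d'. a \<in> A1 \<Longrightarrow> b \<in> A2 \<Longrightarrow> c \<in> A3 \<Longrightarrow> d \<in> A4 \<Longrightarrow>
              a' \<in> A1 \<Longrightarrow> b' \<in> A2 \<Longrightarrow> c' \<in> A3 \<Longrightarrow> d' \<in> A4 \<Longrightarrow>
              a + b + c + d = a' + b' + c' + d' \<Longrightarrow> a = a' \<and> b = b' \<and> c = c' \<and> d = d'"
  shows "internal_dsum [A1, A2, A3, A4] C"
  unfolding internal_dsum_def
proof (intro conjI allI impI ballI)
  have sl: "sum_list [a, b, c, d] = a + b + c + d" for a b c d :: 'a by (simp add: add.assoc)
  {
    fix xs :: "'a list" assume "length xs = length [A1, A2, A3, A4] \<and> (\<forall>i<length [A1, A2, A3, A4]. xs ! i \<in> [A1, A2, A3, A4] ! i)"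
    then have "length xs = 4" "xs ! 0 \<in> A1" "xs ! 1 \<in> A2" "xs ! 2 \<in> A3" "xs ! 3 \<in> A4"
      using sel4[of A1 A2 A3 A4 xs] by auto
    then show "sum_list xs \<in> C" using list4_eq[of xs] cl sl by metis
  }
  fix x assume "x \<in> C"
  then obtain a b c d where ab: "a \<in> A1" "b \<in> A2" "c \<in> A3" "d \<in> A4" "a + b + c + d = x" using ex by blast
  show "\<exists>!xs. length xs = length [A1, A2, A3, A4] \<and> (\<forall>i<length [A1, A2, A3, A4]. xs ! i \<in> [A1, A2, A3, A4] ! i) \<and> sum_list xs = x"
  proof (rule ex1I[of _ "[a, b, c, d]"])
    show "length [a, b, c, d] = length [A1, A2, A3, A4] \<and> (\<forall>i<length [A1, A2, A3, A4]. [a, b, c, d] ! i \<in> [A1, A2, A3, A4] ! i) \<and> sum_list [a, b, c, d] = x"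
      using ab sl by (auto simp: less_Suc_eq nth_Cons' numeral_eq_Suc)
  next
    fix ys assume ys: "length ys = length [A1, A2, A3, A4] \<and> (\<forall>i<length [A1, A2, A3, A4]. ys ! i \<in> [A1, A2, A3, A4] ! i) \<and> sum_list ys = x"
    then have l4: "length ys = 4" and m: "ys ! 0 \<in> A1" "ys ! 1 \<in> A2" "ys ! 2 \<in> A3" "ys ! 3 \<in> A4"
      using sel4[of A1 A2 A3 A4 ys] by auto
    have "ys ! 0 + ys ! 1 + ys ! 2 + ys ! 3 = x" using ys list4_eq[OF l4] sl by metis
    then have "ys ! 0 = a \<and> ys ! 1 = b \<and> ys ! 2 = c \<and> ys ! 3 = d" using un[OF m ab(1-4)] ab(5) by metis
    then show "ys = [a, b, c, d]" using list4_eq[OF l4] by simp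
  qed
qed



context lat1 begin

definition V :: "'h set" where
  "V = {v. (\<forall>j<length rs. B v (rs ! j) = 0) \<and> (\<forall>j<length ss. B v (ss ! j) = 0) \<and> (\<forall>j<length rs. B v (fs ! j) = 0)}"

lemma V_lspan_ss: "v \<in> V \<Longrightarrow> y \<in> lspan ss \<Longrightarrow> B v y = 0"
  unfolding lspan_def V_def using B_lcomb_zero[OF bil, of ss v] by blast

lemma V_D: "v \<in> V \<Longrightarrow> B v (lcomb ds c) = 0"
  using V_lspan_ss D_lspan by blast

lemma V_R: "v \<in> V \<Longrightarrow> B v (lcomb rs c) = 0"
  unfolding V_def using B_lcomb_zero[OF bil, of rs v] by blast

lemma V_F: "v \<in> V \<Longrightarrow> B v (lcomb fs c) = 0"
  unfolding V_def using B_lcomb_zero[OF bil, of fs v] by simp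

lemma zero_V: "0 \<in> V"
  unfolding V_def by (simp add: bilinear_lzero[OF bil])

lemma subspace_V: "subspace V"
  unfolding subspace_def V_def
  by (simp add: bilinear_lzero[OF bil] bilinear_ladd[OF bil] bilinear_lmul[OF bil])

definition sum4 where "sum4 v a b c = v + lcomb rs a + lcomb fs b + lcomb ds c"

lemma pair4_r:
  assumes "v \<in> V" "j < length rs" shows "B (sum4 v a b c) (rs ! j) = b j"
proof -
  have "B v (rs ! j) = 0" using assms unfolding V_def by blast
  moreover have "B (lcomb fs b) (rs ! j) = b j"
    using assms(2) by (intro lcomb_B_delta[OF bil]) (simp_all add: fs_r)
  moreover have "B (lcomb ds c) (rs ! j) = 0" using assms(2) by (intro lcomb_B_zero[OF bil]) (simp add: ds_r)
  ultimately show ?thesis using assms(2) unfolding sum4_def bilinear_ladd[OF bil] by (simp add: B_rcomb_r)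
qed

lemma pair4_s:
  assumes "v \<in> V" "j < length ss" shows "B (sum4 v a b c) (ss ! j) = c j"
proof -
  have "B v (ss ! j) = 0" using assms unfolding V_def by blast
  moreover have "B (lcomb fs b) (ss ! j) = 0"
    using assms(2) by (intro lcomb_B_zero[OF bil]) (simp add: fs_s)
  moreover have "B (lcomb ds c) (ss ! j) = c j" using assms(2) by (intro lcomb_B_delta[OF bil]) (simp_all add: ds_s)
  ultimately show ?thesis using assms(2) unfolding sum4_def bilinear_ladd[OF bil] by (simp add: B_rcomb_s)
qed

lemma pair4_f:
  assumes "v \<in> V" "j < length rs" shows "B (sum4 v a b c) (fs ! j) = a j"
proof -
  have "B v (fs ! j) = 0" using assms unfolding V_def by blast
  moreover have "B (lcomb rs a) (fs ! j) = a j"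
    using assms(2) by (intro lcomb_B_delta[OF bil]) (simp_all add: Bsym[of "rs ! _" "fs ! j"] fs_r)
  moreover have "B (lcomb fs b) (fs ! j) = 0"
    using assms(2) by (intro lcomb_B_zero[OF bil]) (simp add: fs_fs)
  moreover have "B (lcomb ds c) (fs ! j) = 0" using assms(2) by (intro lcomb_B_zero[OF bil]) (simp add: ds_f)
  ultimately show ?thesis using assms(2) unfolding sum4_def bilinear_ladd[OF bil] by simp
qed

definition ca where "ca x = (\<lambda>j. B x (fs ! j))"
definition cb where "cb x = (\<lambda>j. B x (rs ! j))"
definition cc where "cc x = (\<lambda>j. B x (ss ! j))"
definition vpart where "vpart x = x - sum4 0 (ca x) (cb x) (cc x)"

lemma vpart_V: "vpart x \<in> V"
  unfolding V_def vpart_def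
  using pair4_r[OF zero_V] pair4_s[OF zero_V] pair4_f[OF zero_V]
  by (simp add: ca_def cb_def cc_def bilinear_lsub[OF bil])

lemma sum4_0: "sum4 v a b c = v + sum4 0 a b c"
  by (simp add: sum4_def algebra_simps)

lemma decomp_all: "x = sum4 (vpart x) (ca x) (cb x) (cc x)"
  unfolding vpart_def using sum4_0[of "x - sum4 0 (ca x) (cb x) (cc x)" "ca x" "cb x" "cc x"] by simp

lemma unique4:
  assumes "v \<in> V" "x = sum4 v a b c"
  shows "lcomb rs a = lcomb rs (ca x)" "lcomb fs b = lcomb fs (cb x)" "lcomb ds c = lcomb ds (cc x)" "v = vpart x"
proof -
  show ra: "lcomb rs a = lcomb rs (ca x)"
    by (rule lcomb_cong) (simp add: ca_def assms pair4_f)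
  show fb: "lcomb fs b = lcomb fs (cb x)"
    by (rule lcomb_cong) (simp add: cb_def assms pair4_r)
  show dc: "lcomb ds c = lcomb ds (cc x)"
    by (rule lcomb_cong) (simp add: cc_def assms pair4_s)
  have "x = v + sum4 0 a b c" using assms(2) sum4_0[of v a b c] by simp
  moreover have "sum4 0 a b c = sum4 0 (ca x) (cb x) (cc x)" unfolding sum4_def using ra fb dc by simp
  ultimately have "x = v + sum4 0 (ca x) (cb x) (cc x)" by simp
  then show "v = vpart x" unfolding vpart_def by (metis add_diff_cancel_right')
qed

end



context lat1 begin

lemma lcomb_zero_fun: "lcomb xs (\<lambda>_. 0) = 0" by (rule lcomb_zero)

lemma int_comb_app:
  "int_comb (fs @ ds) k = lcomb fs (\<lambda>i. of_int (k i)) + lcomb ds (\<lambda>i. of_int (k (length rs + i)))"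
  unfolding int_comb_lcomb lcomb_append by simp

lemma Gam_sum4: "int_comb (fs @ ds) k = sum4 0 (\<lambda>_. 0) (\<lambda>i. of_int (k i)) (\<lambda>i. of_int (k (length rs + i)))"
  unfolding int_comb_app sum4_def lcomb_zero by simp

lemma F_sum4: "int_comb fs k = sum4 0 (\<lambda>_. 0) (\<lambda>i. of_int (k i)) (\<lambda>_. 0)"
  unfolding int_comb_lcomb sum4_def lcomb_zero by simp

lemma D_sum4: "int_comb ds k = sum4 0 (\<lambda>_. 0) (\<lambda>_. 0) (\<lambda>i. of_int (k i))"
  unfolding int_comb_lcomb sum4_def lcomb_zero by simp

lemma dual_sum4:
  assumes "v \<in> V" "\<And>j. j < length rs \<Longrightarrow> b j \<in> \<int>" "\<And>j. j < length ss \<Longrightarrow> c j \<in> \<int>"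
  shows "sum4 v a b c \<in> dual_lattice B L"
  unfolding dual_char using assms pair4_r[OF assms(1)] pair4_s[OF assms(1)] by simp

lemma perp_sum4:
  assumes "v \<in> V" shows "sum4 v a (\<lambda>_. 0) (\<lambda>_. 0) \<in> perp_space B L"
  unfolding perp_char using pair4_r[OF assms(1)] pair4_s[OF assms(1)] by simp

lemma cb_int: "x \<in> dual_lattice B L \<Longrightarrow> lcomb fs (cb x) = int_comb fs (\<lambda>j. \<lfloor>cb x j\<rfloor>)"
  unfolding int_comb_lcomb by (rule lcomb_cong) (simp add: dual_char cb_def int_of_Ints)

lemma cc_int: "x \<in> dual_lattice B L \<Longrightarrow> lcomb ds (cc x) = int_comb ds (\<lambda>j. \<lfloor>cc x j\<rfloor>)"
  unfolding int_comb_lcomb by (rule lcomb_cong) (simp add: dual_char cc_def int_of_Ints)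

lemma Gam_dual: "range (int_comb (fs @ ds)) \<subseteq> dual_lattice B L"
  unfolding Gam_sum4 by (auto intro!: dual_sum4 zero_V)

lemma perp_dual: "perp_space B L \<subseteq> dual_lattice B L"
  by (auto simp: perp_char dual_char)

lemma dual_add: "x \<in> dual_lattice B L \<Longrightarrow> y \<in> dual_lattice B L \<Longrightarrow> x + y \<in> dual_lattice B L"
  unfolding dual_char by (simp add: bilinear_ladd[OF bil] Ints_add)

lemma fg_Gam: "fg_free_subgroup (range (int_comb (fs @ ds)))"
  unfolding fg_free_subgroup_def
proof (intro exI conjI allI impI)
  fix k i assume k: "int_comb (fs @ ds) k = 0" and i: "i < length (fs @ ds)"
  show "k i = 0"
  proof (cases "i < length rs")
    case True
    have "B (int_comb (fs @ ds) k) (rs ! i) = of_int (k i)" unfolding Gam_sum4 using pair4_r[OF zero_V True] by simp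
    then show ?thesis using k by (simp add: bilinear_lzero[OF bil])
  next
    case False
    then obtain j where j: "i = length rs + j" "j < length ss" using i by (metis add_diff_inverse_nat fs_len ds_len length_append nat_add_left_cancel_less)
    have "B (int_comb (fs @ ds) k) (ss ! j) = of_int (k i)" unfolding Gam_sum4 j(1) using pair4_s[OF zero_V j(2)] by simp
    then show ?thesis using k by (simp add: bilinear_lzero[OF bil])
  qed
qed simp

lemma fg_F: "fg_free_subgroup (range (int_comb fs))"
  unfolding fg_free_subgroup_def
proof (intro exI conjI allI impI)
  fix k i assume k: "int_comb fs k = 0" and i: "i < length fs"
  have "B (int_comb fs k) (rs ! i) = of_int (k i)" unfolding F_sum4 using pair4_r[OF zero_V] i by simp
  then show "k i = 0" using k by (simp add: bilinear_lzero[OF bil])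
qed simp

lemma fg_D: "fg_free_subgroup (range (int_comb ds))"
  unfolding fg_free_subgroup_def
proof (intro exI conjI allI impI)
  fix k i assume k: "int_comb ds k = 0" and i: "i < length ds"
  have "B (int_comb ds k) (ss ! i) = of_int (k i)" unfolding D_sum4 using pair4_s[OF zero_V] i by simp
  then show "k i = 0" using k by (simp add: bilinear_lzero[OF bil])
qed simp

lemma F_Gam: "range (int_comb fs) \<subseteq> range (int_comb (fs @ ds))"
proof
  fix x assume "x \<in> range (int_comb fs)"
  then obtain k where x: "x = int_comb fs k" by blast
  have "lcomb fs (\<lambda>i. of_int (if i < length rs then k i else 0)) = lcomb fs (\<lambda>i. of_int (k i))"
    by (rule lcomb_cong) simp
  moreover have "lcomb ds (\<lambda>i. of_int (if length rs + i < length rs then k (length rs + i) else 0)) = 0"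
    by (rule lcomb_zero_cond) simp
  ultimately have "int_comb (fs @ ds) (\<lambda>i. if i < length rs then k i else 0) = x"
    unfolding int_comb_app x by (simp add: int_comb_lcomb)
  then show "x \<in> range (int_comb (fs @ ds))" by (metis rangeI)
qed

lemma D_Gam: "range (int_comb ds) \<subseteq> range (int_comb (fs @ ds))"
proof
  fix x assume "x \<in> range (int_comb ds)"
  then obtain k where x: "x = int_comb ds k" by blast
  have "lcomb fs (\<lambda>i. of_int (if i < length rs then 0 else k (i - length rs))) = 0"
    by (rule lcomb_zero_cond) simp
  then have "int_comb (fs @ ds) (\<lambda>i. if i < length rs then 0 else k (i - length rs)) = x"
    unfolding int_comb_app x by (simp add: int_comb_lcomb)
  then show "x \<in> range (int_comb (fs @ ds))" by (metis rangeI)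
qed

lemma Gam_canon:
  assumes w: "w \<in> perp_space B L"
  shows "int_comb (fs @ ds) k = lcomb fs (cb (w + int_comb (fs @ ds) k)) + lcomb ds (cc (w + int_comb (fs @ ds) k))"
proof -
  let ?x = "w + int_comb (fs @ ds) k"
  have r: "cb ?x j = of_int (k j)" if "j < length rs" for j
  proof -
    have "B w (rs ! j) = 0" using w that by (simp add: perp_char)
    moreover have "B (int_comb (fs @ ds) k) (rs ! j) = of_int (k j)"
      unfolding Gam_sum4 using pair4_r[OF zero_V that] by simp
    ultimately show ?thesis by (simp add: cb_def bilinear_ladd[OF bil])
  qed
  have s: "cc ?x j = of_int (k (length rs + j))" if "j < length ss" for j
  proof -
    have "B w (ss ! j) = 0" using w that by (simp add: perp_char)
    moreover have "B (int_comb (fs @ ds) k) (ss ! j) = of_int (k (length rs + j))"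
      unfolding Gam_sum4 using pair4_s[OF zero_V that] by simp
    ultimately show ?thesis by (simp add: cc_def bilinear_ladd[OF bil])
  qed
  have "lcomb fs (cb ?x) = lcomb fs (\<lambda>i. of_int (k i))" by (rule lcomb_cong) (simp add: r)
  moreover have "lcomb ds (cc ?x) = lcomb ds (\<lambda>i. of_int (k (length rs + i)))" by (rule lcomb_cong) (simp add: s)
  ultimately show ?thesis unfolding int_comb_app by simp
qed

lemma dsum2: "internal_dsum [perp_space B L, range (int_comb (fs @ ds))] (dual_lattice B L)"
proof (rule internal_dsum2I)
  fix a b assume "a \<in> perp_space B L" "b \<in> range (int_comb (fs @ ds))"
  then show "a + b \<in> dual_lattice B L" using perp_dual Gam_dual dual_add by blast
next
  fix x assume x: "x \<in> dual_lattice B L"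
  define w where "w = sum4 (vpart x) (ca x) (\<lambda>_. 0) (\<lambda>_. 0)"
  define k where "k i = (if i < length rs then \<lfloor>cb x i\<rfloor> else \<lfloor>cc x (i - length rs)\<rfloor>)" for i
  have "w \<in> perp_space B L" unfolding w_def using perp_sum4[OF vpart_V] .
  moreover have gk: "int_comb (fs @ ds) k = lcomb fs (cb x) + lcomb ds (cc x)"
  proof -
    have "lcomb fs (\<lambda>i. of_int (k i)) = lcomb fs (cb x)"
      by (rule lcomb_cong) (use x in \<open>simp add: k_def dual_char cb_def int_of_Ints\<close>)
    moreover have "lcomb ds (\<lambda>i. of_int (k (length rs + i))) = lcomb ds (cc x)"
      by (rule lcomb_cong) (use x in \<open>simp add: k_def dual_char cc_def int_of_Ints\<close>)
    ultimately show ?thesis unfolding int_comb_app by simp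
  qed
  moreover have "w + int_comb (fs @ ds) k = x"
    unfolding gk w_def using decomp_all[of x] by (simp add: sum4_def lcomb_zero add.assoc)
  ultimately show "\<exists>a b. a \<in> perp_space B L \<and> b \<in> range (int_comb (fs @ ds)) \<and> a + b = x" by blast
next
  fix a b a' b' assume as: "a \<in> perp_space B L" "b \<in> range (int_comb (fs @ ds))"
    "a' \<in> perp_space B L" "b' \<in> range (int_comb (fs @ ds))" "a + b = a' + b'"
  obtain k k' where k: "b = int_comb (fs @ ds) k" "b' = int_comb (fs @ ds) k'" using as(2,4) by blast
  have "b = b'" using Gam_canon[OF as(1), of k] Gam_canon[OF as(3), of k'] as(5) k by simp
  then show "a = a' \<and> b = b'" using as(5) by simp
qed

end



context lat1 begin

lemma span_rad: "span (radical B L) = lspan rs"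
  using rad span_range_int_comb by simp

lemma dsum4: "internal_dsum [V, lspan rs, range (int_comb fs), range (int_comb ds)] (dual_lattice B L)"
proof (rule internal_dsum4I)
  fix a b c d assume as: "a \<in> V" "b \<in> lspan rs" "c \<in> range (int_comb fs)" "d \<in> range (int_comb ds)"
  obtain u k l where ukl: "b = lcomb rs u" "c = int_comb fs k" "d = int_comb ds l"
    using as(2-4) unfolding lspan_def by blast
  have "a + b + c + d = sum4 a u (\<lambda>i. of_int (k i)) (\<lambda>i. of_int (l i))"
    unfolding sum4_def ukl int_comb_lcomb ..
  then show "a + b + c + d \<in> dual_lattice B L" using dual_sum4[OF as(1)] by simp
next
  fix x assume x: "x \<in> dual_lattice B L"
  have "x = vpart x + lcomb rs (ca x) + lcomb fs (cb x) + lcomb ds (cc x)"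
    using decomp_all[of x] unfolding sum4_def .
  moreover have "lcomb rs (ca x) \<in> lspan rs" by (simp add: lspan_def)
  moreover have "lcomb fs (cb x) \<in> range (int_comb fs)" using cb_int[OF x] by simp
  moreover have "lcomb ds (cc x) \<in> range (int_comb ds)" using cc_int[OF x] by simp
  ultimately show "\<exists>a b c d. a \<in> V \<and> b \<in> lspan rs \<and> c \<in> range (int_comb fs) \<and> d \<in> range (int_comb ds) \<and> a + b + c + d = x"
    using vpart_V by metis
next
  fix a b c d a' b' c' d'
  assume as: "a \<in> V" "b \<in> lspan rs" "c \<in> range (int_comb fs)" "d \<in> range (int_comb ds)"
    "a' \<in> V" "b' \<in> lspan rs" "c' \<in> range (int_comb fs)" "d' \<in> range (int_comb ds)"
    and eq: "a + b + c + d = a' + b' + c' + d'"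
  obtain u k l where ukl: "b = lcomb rs u" "c = int_comb fs k" "d = int_comb ds l"
    using as(2-4) unfolding lspan_def by blast
  obtain u' k' l' where ukl': "b' = lcomb rs u'" "c' = int_comb fs k'" "d' = int_comb ds l'"
    using as(6-8) unfolding lspan_def by blast
  define x where "x = a + b + c + d"
  have x1: "x = sum4 a u (\<lambda>i. of_int (k i)) (\<lambda>i. of_int (l i))"
    unfolding x_def sum4_def ukl int_comb_lcomb ..
  have x2: "x = sum4 a' u' (\<lambda>i. of_int (k' i)) (\<lambda>i. of_int (l' i))"
    unfolding x_def eq sum4_def ukl' int_comb_lcomb ..
  note u1 = unique4[OF as(1) x1] and u2 = unique4[OF as(5) x2]
  show "a = a' \<and> b = b' \<and> c = c' \<and> d = d'"
    using u1 u2 unfolding ukl ukl' int_comb_lcomb by simp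
qed

lemma orth_V_RF: "orthogonal_sets B V (set_sum (lspan rs) (range (int_comb fs)))"
  unfolding orthogonal_sets_def set_sum_def lspan_def
  by (auto simp: bilinear_radd[OF bil] V_R V_F int_comb_lcomb)

lemma orth_V_D: "orthogonal_sets B V (range (int_comb ds))"
  unfolding orthogonal_sets_def by (auto simp: V_D int_comb_lcomb)

lemma B_rcomb_D: "B (lcomb rs a) (lcomb ds c) = 0"
  using lcomb_B_zero[OF bil] B_r_lspan_ss D_lspan by blast

lemma B_fcomb_D: "B (lcomb fs a) (lcomb ds c) = 0"
  using lcomb_B_zero[OF bil] fs_lspan_ss D_lspan by (metis fs_len)

lemma orth_RF_D: "orthogonal_sets B (set_sum (lspan rs) (range (int_comb fs))) (range (int_comb ds))"
  unfolding orthogonal_sets_def set_sum_def lspan_def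
  by (auto simp: bilinear_ladd[OF bil] B_rcomb_D B_fcomb_D int_comb_lcomb)

lemma nd_V: "nondegenerate_on B V"
  unfolding nondegenerate_on_def
proof (intro ballI impI)
  fix v assume v: "v \<in> V" "\<forall>y\<in>V. B v y = 0"
  have "B v y = 0" for y
  proof -
    have "B v y = B v (sum4 (vpart y) (ca y) (cb y) (cc y))" using decomp_all[of y] by simp
    also have "\<dots> = 0" unfolding sum4_def bilinear_radd[OF bil]
      using v vpart_V V_R V_F V_D by simp
    finally show ?thesis .
  qed
  then show "v = 0" using nondeg by blast
qed

lemma nd_RF: "nondegenerate_on B (set_sum (lspan rs) (range (int_comb fs)))"
  unfolding nondegenerate_on_def
proof (intro ballI impI)
  fix x assume x: "x \<in> set_sum (lspan rs) (range (int_comb fs))"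
    and h: "\<forall>y\<in>set_sum (lspan rs) (range (int_comb fs)). B x y = 0"
  obtain u k where x': "x = lcomb rs u + int_comb fs k" using x unfolding set_sum_def lspan_def by blast
  have xs: "x = sum4 0 u (\<lambda>i. of_int (k i)) (\<lambda>_. 0)"
    unfolding x' sum4_def int_comb_lcomb by (simp add: lcomb_zero)
  have "0 \<in> lspan rs" "0 \<in> range (int_comb fs)"
    using lspan_subspace subspace_0 sg_zero[OF sg_range_int_comb] by auto
  have k0: "of_int (k j) = (0::real)" if j: "j < length rs" for j
  proof -
    have "rs ! j \<in> lspan rs" using j by (simp add: lspan_eq_span span_base)
    then have "rs ! j + 0 \<in> set_sum (lspan rs) (range (int_comb fs))"
      unfolding set_sum_def using \<open>0 \<in> range (int_comb fs)\<close> by blast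
    then have "B x (rs ! j) = 0" using h by simp
    then show ?thesis using pair4_r[OF zero_V j] xs by simp
  qed
  have u0: "u j = 0" if j: "j < length rs" for j
  proof -
    have "fs ! j \<in> range (int_comb fs)" using j set_subset_range_int_comb[of fs] by (simp add: subset_iff)
    then have "0 + fs ! j \<in> set_sum (lspan rs) (range (int_comb fs))"
      unfolding set_sum_def using \<open>0 \<in> lspan rs\<close> by blast
    then have "B x (fs ! j) = 0" using h by simp
    then show ?thesis using pair4_f[OF zero_V j] xs by simp
  qed
  have "lcomb rs u = 0" using u0 by (rule lcomb_zero_cond)
  moreover have "int_comb fs k = 0" unfolding int_comb_lcomb using k0 by (intro lcomb_zero_cond) simp
  ultimately show "x = 0" using x' by simp
qed

lemma nd_D: "nondegenerate_on B (range (int_comb ds))"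
  unfolding nondegenerate_on_def
proof (intro ballI impI)
  fix x assume x: "x \<in> range (int_comb ds)" and h: "\<forall>y\<in>range (int_comb ds). B x y = 0"
  have "x \<in> lspan ss" using x D_lspan by (auto simp: int_comb_lcomb)
  then obtain u where u: "x = lcomb ss u" unfolding lspan_def by blast
  have "u j = 0" if j: "j < length ss" for j
  proof -
    have "ds ! j \<in> range (int_comb ds)" using j set_subset_range_int_comb[of ds] by (simp add: subset_iff)
    then have "B x (ds ! j) = 0" using h by blast
    moreover have "B x (ds ! j) = u j" unfolding u
      using j by (intro lcomb_B_delta[OF bil]) (simp_all add: Bsym[of "ss ! _" "ds ! j"] ds_s)
    ultimately show ?thesis by simp
  qed
  then show "x = 0" unfolding u by (rule lcomb_zero_cond)
qed

lemma zero_R: "\<forall>x\<in>lspan rs. \<forall>y\<in>lspan rs. B x y = 0"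
  unfolding lspan_def using rcomb_rcomb by auto

lemma zero_F: "\<forall>x\<in>range (int_comb fs). \<forall>y\<in>range (int_comb fs). B x y = 0"
proof (intro ballI)
  fix x y assume "x \<in> range (int_comb fs)" "y \<in> range (int_comb fs)"
  then obtain k l where kl: "x = int_comb fs k" "y = int_comb fs l" by blast
  have "B (fs ! i) (lcomb fs c) = 0" if "i < length fs" for i c
    using that by (intro B_lcomb_zero[OF bil]) (simp add: fs_fs)
  then show "B x y = 0" unfolding kl int_comb_lcomb by (intro lcomb_B_zero[OF bil]) simp
qed

lemma main:
  "\<exists>\<Gamma>. \<Gamma> \<subseteq> dual_lattice B L \<and> fg_free_subgroup \<Gamma> \<and>
           internal_dsum [perp_space B L, \<Gamma>] (dual_lattice B L) \<and>
           (\<exists>V F D. subspace V \<and> V \<subseteq> perp_space B L \<and>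
              fg_free_subgroup F \<and> F \<subseteq> \<Gamma> \<and> fg_free_subgroup D \<and> D \<subseteq> \<Gamma> \<and>
              internal_dsum [V, span (radical B L), F, D] (dual_lattice B L) \<and>
              orthogonal_sets B V (set_sum (span (radical B L)) F) \<and>
              orthogonal_sets B V D \<and>
              orthogonal_sets B (set_sum (span (radical B L)) F) D \<and>
              nondegenerate_on B V \<and>
              nondegenerate_on B (set_sum (span (radical B L)) F) \<and>
              nondegenerate_on B D \<and>
              (\<forall>x\<in>span (radical B L). \<forall>y\<in>span (radical B L). B x y = 0) \<and>
              (\<forall>x\<in>F. \<forall>y\<in>F. B x y = 0))"
proof -
  have VP: "V \<subseteq> perp_space B L" by (auto simp: V_def perp_char)
  show ?thesis unfolding span_rad
    using Gam_dual fg_Gam dsum2 subspace_V VP fg_F F_Gam fg_D D_Gam dsum4 orth_V_RF orth_V_D orth_RF_D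
      nd_V nd_RF nd_D zero_R zero_F by blast
qed

end



theorem lemma3p2:
  fixes B :: "'h::euclidean_space \<Rightarrow> 'h \<Rightarrow> real"
    and \<Lambda> :: "'h set"
  assumes bil: "bilinear B"
    and sym: "\<And>x y. B x y = B y x"
    and nondeg: "\<And>x. (\<forall>y. B x y = 0) \<Longrightarrow> x = 0"
    and subgrp: "add_subgroup \<Lambda>"
    and disc: "discrete \<Lambda>"
    and even: "\<And>a. a \<in> \<Lambda> \<Longrightarrow> \<exists>k::int. B a a = 2 * of_int k"
  shows "\<exists>\<Gamma>. \<Gamma> \<subseteq> dual_lattice B \<Lambda> \<and> fg_free_subgroup \<Gamma> \<and>
           internal_dsum [perp_space B \<Lambda>, \<Gamma>] (dual_lattice B \<Lambda>) \<and>
           (\<exists>V F D. subspace V \<and> V \<subseteq> perp_space B \<Lambda> \<and>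
              fg_free_subgroup F \<and> F \<subseteq> \<Gamma> \<and> fg_free_subgroup D \<and> D \<subseteq> \<Gamma> \<and>
              internal_dsum [V, span (radical B \<Lambda>), F, D] (dual_lattice B \<Lambda>) \<and>
              orthogonal_sets B V (set_sum (span (radical B \<Lambda>)) F) \<and>
              orthogonal_sets B V D \<and>
              orthogonal_sets B (set_sum (span (radical B \<Lambda>)) F) D \<and>
              nondegenerate_on B V \<and>
              nondegenerate_on B (set_sum (span (radical B \<Lambda>)) F) \<and>
              nondegenerate_on B D \<and>
              (\<forall>x\<in>span (radical B \<Lambda>). \<forall>y\<in>span (radical B \<Lambda>). B x y = 0) \<and>
              (\<forall>x\<in>F. \<forall>y\<in>F. B x y = 0))"
  proof -
  have "lat0 B \<Lambda>" using assms by (simp add: lat0_def)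
  then interpret lat0 B \<Lambda> .
  obtain rs ss where rs: "set rs \<subseteq> \<Lambda>" "set ss \<subseteq> \<Lambda>" "radical B \<Lambda> = range (int_comb rs)"
     "\<Lambda> \<subseteq> {int_comb rs c1 + int_comb ss c2 | c1 c2. True}"
     "lindep (rs @ ss)" "lindep ss"
     "\<forall>w\<in>lspan ss. (\<forall>j<length ss. B w (ss ! j) = 0) \<longrightarrow> w = 0"
    using basis_exists by blast
  have "lat1 B \<Lambda> rs ss" using rs \<open>lat0 B \<Lambda>\<close> by (simp add: lat1_def lat1_axioms_def)
  then interpret lat1 B \<Lambda> rs ss .
  show ?thesis using main .
qed

end
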